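(* For every nonnegative integer $n$, the bistatistic $(\operatorname{asc}, \operatorname{rlm})$ has the same distribution over $\mathcal{A}_n(021)$ as over $S_n(132)$; that is, for all nonnegative integers $a, r$, $$\#\{x \in \mathcal{A}_n(021) : \operatorname{asc}(x) = a,\ \operatorname{rlm}(x) = r\} = \#\{\pi \in S_n(132) : \operatorname{asc}(\pi) = a,\ \operatorname{rlm}(\pi) = r\}.$$
   Context: For a sequence $x = x_1 x_2 \ldots x_n$ of nonnegative integers, an index $i$ with $1 \le i < n$ is an ascent if $x_i < x_{i+1}$, and $\operatorname{asc}(x)$ denotes the number of ascents of $x$. A right-to-left minimum of $x$ is an index $i$ such that $x_i < x_j$ for all $j > i$; $\operatorname{rlm}(x)$ denotes the number of right-to-left minima. Both statistics are applied to permutations viewed as sequences $\pi_1 \pi_2 \ldots \pi_n$. An ascent sequence of length $n$ is a sequence $x_1 \ldots x_n$ of nonnegative integers with $x_1 = 0$ (when $n \ge 1$) and $x_i \le \operatorname{asc}(x_1 \ldots x_{i-1}) + 1$ for all $1 < i \le n$. The empty sequence is the unique ascent sequence of length $0$. A sequence contains the pattern $021$ if it has entries $x_{i_1}, x_{i_2}, x_{i_3}$ with $i_1 < i_2 < i_3$ and $x_{i_1} < x_{i_3} < x_{i_2}$; otherwise it avoids $021$. $\mathcal{A}_n(021)$ is the set of ascent sequences of length $n$ that avoid $021$. $S_n$ is the set of permutations of $\{1, \ldots, n\}$. A permutation $\pi$ contains $132$ if there are indices $i < j < k$ with $\pi_i < \pi_k < \pi_j$; $S_n(132)$ is the set of permutations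 in $S_n$ avoiding $132$. *)

theory Defs
  imports Main
begin

text \<open>Sequences are lists of naturals; list index i (0-based) corresponds to position i+1.\<close>

definition asc :: "nat list \<Rightarrow> nat" where
  "asc x = card {i. Suc i < length x \<and> x ! i < x ! Suc i}"

definition rlm :: "nat list \<Rightarrow> nat" where
  "rlm x = card {i. i < length x \<and> (\<forall>j. i < j \<and> j < length x \<longrightarrow> x ! i < x ! j)}"

definition is_ascent_seq :: "nat list \<Rightarrow> bool" where
  "is_ascent_seq x \<longleftrightarrow>
     (x \<noteq> [] \<longrightarrow> x ! 0 = 0) \<and>
     (\<forall>i. 0 < i \<and> i < length x \<longrightarrow> x ! i \<le> asc (take i x) + 1)"

definition contains_021 :: "nat list \<Rightarrow> bool" where
  "contains_021 x \<longleftrightarrow> (\<exists>i j k. i < j \<and> j < k \<and> k < length x \<and>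
      x ! i < x ! k \<and> x ! k < x ! j)"

definition ascent_seqs_avoid_021 :: "nat \<Rightarrow> nat list set" where
  "ascent_seqs_avoid_021 n = {x. length x = n \<and> is_ascent_seq x \<and> \<not> contains_021 x}"

definition perms :: "nat \<Rightarrow> nat list set" where
  "perms n = {p. length p = n \<and> distinct p \<and> set p = {1..n}}"

definition contains_132 :: "nat list \<Rightarrow> bool" where
  "contains_132 p \<longleftrightarrow> (\<exists>i j k. i < j \<and> j < k \<and> k < length p \<and>
      p ! i < p ! k \<and> p ! k < p ! j)"

definition perms_avoid_132 :: "nat \<Rightarrow> nat list set" where
  "perms_avoid_132 n = {p \<in> perms n. \<not> contains_132 p}"

end

theory Submission
  imports Defs
begin


lemma asc_Nil[simp]: "asc [] = 0" by (simp add: asc_def)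

lemma asc_Cons: "asc (a # ys) = (if ys \<noteq> [] \<and> a < hd ys then 1 else 0) + asc ys"
proof -
  have eq: "{i. Suc i < length (a#ys) \<and> (a#ys)!i < (a#ys)!Suc i}
      = {i::nat. i = 0 \<and> ys \<noteq> [] \<and> a < hd ys} \<union> Suc ` {i. Suc i < length ys \<and> ys!i < ys!Suc i}"
  proof (rule set_eqI)
    fix i show "i \<in> {i. Suc i < length (a#ys) \<and> (a#ys)!i < (a#ys)!Suc i} \<longleftrightarrow>
      i \<in> {i::nat. i = 0 \<and> ys \<noteq> [] \<and> a < hd ys} \<union> Suc ` {i. Suc i < length ys \<and> ys!i < ys!Suc i}"
      by (cases i; cases ys) (auto simp: image_iff)
  qed
  have "card ({i::nat. i = 0 \<and> ys \<noteq> [] \<and> a < hd ys} \<union> Suc ` {i. Suc i < length ys \<and> ys!i < ys!Suc i})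
     = card {i::nat. i = 0 \<and> ys \<noteq> [] \<and> a < hd ys} + card (Suc ` {i. Suc i < length ys \<and> ys!i < ys!Suc i})"
    apply (rule card_Un_disjoint)
    apply (rule finite_subset[of _ "{0}"], force, simp)
    apply (rule finite_imageI, rule finite_subset[of _ "{..<length ys}"], force, simp)
    by auto
  also have "card (Suc ` {i. Suc i < length ys \<and> ys!i < ys!Suc i}) = asc ys"
    by (simp add: card_image asc_def)
  also have "card {i::nat. i = 0 \<and> ys \<noteq> [] \<and> a < hd ys} = (if ys \<noteq> [] \<and> a < hd ys then 1 else 0)"
    by auto
  finally show ?thesis using eq by (simp add: asc_def)
qed

lemma rlm_Nil[simp]: "rlm [] = 0" by (simp add: rlm_def)

lemma rlm_Cons: "rlm (a # ys) = (if \<forall>y\<in>set ys. a < y then 1 else 0) + rlm ys"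
proof -
  have eq: "{i. i < length (a#ys) \<and> (\<forall>j. i < j \<and> j < length (a#ys) \<longrightarrow> (a#ys)!i < (a#ys)!j)}
      = {i::nat. i = 0 \<and> (\<forall>y\<in>set ys. a < y)} \<union> Suc ` {i. i < length ys \<and> (\<forall>j. i < j \<and> j < length ys \<longrightarrow> ys!i < ys!j)}"
  proof (rule set_eqI)
    fix i show "i \<in> {i. i < length (a#ys) \<and> (\<forall>j. i < j \<and> j < length (a#ys) \<longrightarrow> (a#ys)!i < (a#ys)!j)} \<longleftrightarrow>
      i \<in> {i::nat. i = 0 \<and> (\<forall>y\<in>set ys. a < y)} \<union> Suc ` {i. i < length ys \<and> (\<forall>j. i < j \<and> j < length ys \<longrightarrow> ys!i < ys!j)}"
    proof (cases i)
      case 0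
      have "(\<forall>j. 0 < j \<and> j < length (a#ys) \<longrightarrow> a < (a#ys)!j) \<longleftrightarrow> (\<forall>y\<in>set ys. a < y)"
      proof
        assume H: "\<forall>j. 0 < j \<and> j < length (a#ys) \<longrightarrow> a < (a#ys)!j"
        show "\<forall>y\<in>set ys. a < y"
        proof
          fix y assume "y \<in> set ys"
          then obtain k where "k < length ys" "ys!k = y" by (auto simp: in_set_conv_nth)
          then show "a < y" using H[rule_format, of "Suc k"] by auto
        qed
      next
        assume H: "\<forall>y\<in>set ys. a < y"
        show "\<forall>j. 0 < j \<and> j < length (a#ys) \<longrightarrow> a < (a#ys)!j"
        proof (intro allI impI)
          fix j assume j: "0 < j \<and> j < length (a#ys)"
          then obtain k where "j = Suc k" by (cases j) auto
          then show "a < (a#ys)!j" using H j nth_mem[of k ys] by auto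
        qed
      qed
      then show ?thesis using 0 by auto
    next
      case (Suc k)
      have "(\<forall>j. Suc k < j \<and> j < length (a#ys) \<longrightarrow> ys!k < (a#ys)!j) \<longleftrightarrow> (\<forall>j. k < j \<and> j < length ys \<longrightarrow> ys!k < ys!j)"
        apply auto
        subgoal for j by (cases j) auto
        done
      then show ?thesis using Suc by (auto simp: image_iff)
    qed
  qed
  have "card ({i::nat. i = 0 \<and> (\<forall>y\<in>set ys. a < y)} \<union> Suc ` {i. i < length ys \<and> (\<forall>j. i < j \<and> j < length ys \<longrightarrow> ys!i < ys!j)})
     = card {i::nat. i = 0 \<and> (\<forall>y\<in>set ys. a < y)} + card (Suc ` {i. i < length ys \<and> (\<forall>j. i < j \<and> j < length ys \<longrightarrow> ys!i < ys!j)})"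
    apply (rule card_Un_disjoint)
    apply (rule finite_subset[of _ "{0}"], force, simp)
    apply (rule finite_imageI, rule finite_subset[of _ "{..<length ys}"], force, simp)
    by auto
  also have "card (Suc ` {i. i < length ys \<and> (\<forall>j. i < j \<and> j < length ys \<longrightarrow> ys!i < ys!j)}) = rlm ys"
    by (simp add: card_image rlm_def)
  also have "card {i::nat. i = 0 \<and> (\<forall>y\<in>set ys. a < y)} = (if \<forall>y\<in>set ys. a < y then 1 else 0)"
    by auto
  finally show ?thesis using eq by (simp add: rlm_def)
qed

lemma asc_single[simp]: "asc [a] = 0" by (simp add: asc_Cons)
lemma rlm_single[simp]: "rlm [a] = 1" by (simp add: rlm_Cons)

lemma asc_append: "asc (xs @ ys) = asc xs + asc ys + (if xs \<noteq> [] \<and> ys \<noteq> [] \<and> last xs < hd ys then 1 else 0)"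
proof (induction xs)
  case Nil then show ?case by simp
next
  case (Cons a xs)
  then show ?case by (cases xs) (auto simp: asc_Cons)
qed

lemma rlm_append_ge: "(\<forall>x\<in>set xs. \<exists>y\<in>set ys. y \<le> x) \<Longrightarrow> rlm (xs @ ys) = rlm ys"
proof (induction xs)
  case Nil then show ?case by simp
next
  case (Cons a xs)
  then obtain y where "y \<in> set ys" "y \<le> a" by auto
  then have "\<not> (\<forall>z\<in>set (xs @ ys). a < z)" by (metis leD set_append Un_iff)
  then show ?case using Cons by (simp add: rlm_Cons)
qed

lemma rlm_append_lt: "(\<forall>x\<in>set xs. \<forall>y\<in>set ys. x < y) \<Longrightarrow> rlm (xs @ ys) = rlm xs + rlm ys"
proof (induction xs)
  case Nil then show ?case by simp
next
  case (Cons a xs)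
  then have "(\<forall>z\<in>set (xs @ ys). a < z) = (\<forall>z\<in>set xs. a < z)" by auto
  then show ?case using Cons by (simp add: rlm_Cons)
qed

definition shift :: "nat \<Rightarrow> nat list \<Rightarrow> nat list" where
  "shift c xs = map (\<lambda>v. v + c) xs"

lemma shift_simps[simp]: "shift c [] = []" "shift c (a # xs) = (a + c) # shift c xs"
  "shift c (xs @ ys) = shift c xs @ shift c ys" "length (shift c xs) = length xs"
  "shift c xs = [] \<longleftrightarrow> xs = []"
  by (auto simp: shift_def)

lemma set_shift: "set (shift c xs) = (\<lambda>v. v + c) ` set xs" by (simp add: shift_def)
lemma distinct_shift[simp]: "distinct (shift c xs) = distinct xs" by (simp add: shift_def distinct_map)
lemma last_shift: "xs \<noteq> [] \<Longrightarrow> last (shift c xs) = last xs + c" by (simp add: shift_def last_map)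
lemma hd_shift: "xs \<noteq> [] \<Longrightarrow> hd (shift c xs) = hd xs + c" by (simp add: shift_def hd_map)
lemma shift_inj: "shift c xs = shift c ys \<Longrightarrow> xs = ys" by (simp add: shift_def inj_map_eq_map inj_def)

lemma asc_shift[simp]: "asc (shift c xs) = asc xs"
  unfolding shift_def by (induction xs) (auto simp: asc_Cons hd_map)

lemma rlm_shift[simp]: "rlm (shift c xs) = rlm xs"
  unfolding shift_def by (induction xs) (auto simp: rlm_Cons)

lemma asc_map_add[simp]: "asc (map (\<lambda>v. v + c) xs) = asc xs"
  by (induction xs) (auto simp: asc_Cons hd_map)

lemma rlm_map_add[simp]: "rlm (map (\<lambda>v. v + c) xs) = rlm xs"
  by (induction xs) (auto simp: rlm_Cons)

lemma asc_replicate[simp]: "asc (replicate n v) = 0"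
  by (induction n) (auto simp: asc_Cons)

lemma rlm_replicate[simp]: "rlm (replicate (Suc n) v) = 1"
  by (induction n) (auto simp: rlm_Cons)

lemma c021_eq_132: "contains_021 x = contains_132 x"
  by (simp add: contains_021_def contains_132_def)

lemma c132_append1: "contains_132 xs \<Longrightarrow> contains_132 (xs @ ys)"
  unfolding contains_132_def
  apply (elim exE conjE)
  subgoal for i j k
    by (rule exI[of _ i], rule exI[of _ j], rule exI[of _ k]) (auto simp: nth_append)
  done

lemma c132_append2: "contains_132 ys \<Longrightarrow> contains_132 (xs @ ys)"
  unfolding contains_132_def
  apply (elim exE conjE)
  subgoal for i j k
    by (rule exI[of _ "length xs + i"], rule exI[of _ "length xs + j"], rule exI[of _ "length xs + k"]) (auto simp: nth_append)
  done

lemma c132_shift[simp]: "contains_132 (shift c xs) = contains_132 xs"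
  unfolding shift_def contains_132_def
  apply (rule iffI; elim exE conjE)
  subgoal for i j k by (intro exI[of _ i] exI[of _ j] exI[of _ k]) auto
  subgoal for i j k by (intro exI[of _ i] exI[of _ j] exI[of _ k]) auto
  done

lemma c132_map_add[simp]: "contains_132 (map (\<lambda>v. v + c) xs) = contains_132 xs"
  unfolding contains_132_def
  apply (rule iffI; elim exE conjE)
  subgoal for i j k by (intro exI[of _ i] exI[of _ j] exI[of _ k]) auto
  subgoal for i j k by (intro exI[of _ i] exI[of _ j] exI[of _ k]) auto
  done

lemma c132_snoc_max: "(\<forall>x\<in>set xs. x < m) \<Longrightarrow> contains_132 (xs @ [m]) \<Longrightarrow> contains_132 xs"
  unfolding contains_132_def
proof (elim exE conjE)
  fix i j k assume H: "\<forall>x\<in>set xs. x < m" "i < j" "j < k" "k < length (xs @ [m])"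
    "(xs @ [m]) ! i < (xs @ [m]) ! k" "(xs @ [m]) ! k < (xs @ [m]) ! j"
  show "\<exists>i j k. i < j \<and> j < k \<and> k < length xs \<and> xs ! i < xs ! k \<and> xs ! k < xs ! j"
  proof (cases "k = length xs")
    case True
    have "j < length xs" using H True by simp
    then have "xs ! j < m" using H nth_mem[of j xs] by auto
    moreover have "m < xs ! j" using H True \<open>j < length xs\<close> by (simp add: nth_append)
    ultimately show ?thesis by simp
  next
    case False
    then show ?thesis using H by (intro exI[of _ i] exI[of _ j] exI[of _ k]) (auto simp: nth_append)
  qed
qed

lemma c132_Cons: "contains_132 (a # xs) \<longleftrightarrow> contains_132 xs \<or> (\<exists>j k. j < k \<and> k < length xs \<and> a < xs!k \<and> xs!k < xs!j)"
proof
  assume "contains_132 (a # xs)"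
  then obtain i j k where H: "i < j" "j < k" "k < length (a#xs)" "(a#xs)!i < (a#xs)!k" "(a#xs)!k < (a#xs)!j"
    unfolding contains_132_def by blast
  show "contains_132 xs \<or> (\<exists>j k. j < k \<and> k < length xs \<and> a < xs!k \<and> xs!k < xs!j)"
  proof (cases i)
    case 0
    then show ?thesis using H by (intro disjI2 exI[of _ "j - 1"] exI[of _ "k - 1"]) (cases j; cases k; auto)
  next
    case (Suc i')
    then show ?thesis using H unfolding contains_132_def
      by (intro disjI1 exI[of _ i'] exI[of _ "j - 1"] exI[of _ "k - 1"]) (cases j; cases k; auto)
  qed
next
  assume "contains_132 xs \<or> (\<exists>j k. j < k \<and> k < length xs \<and> a < xs!k \<and> xs!k < xs!j)"
  then show "contains_132 (a # xs)"
  proof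
    assume "contains_132 xs" then show ?thesis using c132_append2[of xs "[a]"] by simp
  next
    assume "\<exists>j k. j < k \<and> k < length xs \<and> a < xs!k \<and> xs!k < xs!j"
    then obtain j k where "j < k" "k < length xs" "a < xs!k" "xs!k < xs!j" by blast
    then show ?thesis unfolding contains_132_def
      by (intro exI[of _ 0] exI[of _ "Suc j"] exI[of _ "Suc k"]) auto
  qed
qed

lemma c132_append_gt: "(\<forall>a\<in>set A. \<forall>c\<in>set C. c < a) \<Longrightarrow> contains_132 (A @ C) \<Longrightarrow> contains_132 A \<or> contains_132 C"
proof (induction A)
  case Nil then show ?case by simp
next
  case (Cons a A)
  from Cons.prems(2) have "contains_132 (A @ C) \<or> (\<exists>j k. j < k \<and> k < length (A @ C) \<and> a < (A@C)!k \<and> (A@C)!k < (A@C)!j)"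
    by (simp add: c132_Cons)
  then show ?case
  proof
    assume "contains_132 (A @ C)"
    then have "contains_132 A \<or> contains_132 C" using Cons by auto
    then show ?thesis by (auto simp: c132_Cons)
  next
    assume "\<exists>j k. j < k \<and> k < length (A @ C) \<and> a < (A@C)!k \<and> (A@C)!k < (A@C)!j"
    then obtain j k where H: "j < k" "k < length (A @ C)" "a < (A@C)!k" "(A@C)!k < (A@C)!j" by blast
    have "k < length A"
    proof (rule ccontr)
      assume "\<not> k < length A"
      then have "(A@C)!k \<in> set C" using H by (auto simp: nth_append)
      then show False using H Cons.prems(1) by fastforce
    qed
    then have "contains_132 (a # A)" using H by (auto simp: c132_Cons nth_append)
    then show ?thesis by simp
  qed
qed


definition DS :: "nat list \<Rightarrow> nat list \<Rightarrow> nat list" where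
  "DS Q P = shift (Suc (length P)) Q @ P @ [Suc (length P)]"

lemma DS_perm:
  assumes "Q \<in> perms i" "P \<in> perms j"
  shows "DS Q P \<in> perms (i + j + 1)"
proof -
  have lQ: "length Q = i" and dQ: "distinct Q" and sQ: "set Q = {1..i}"
    and lP: "length P = j" and dP: "distinct P" and sP: "set P = {1..j}"
    using assms by (auto simp: perms_def)
  have s1: "set (shift (Suc j) Q) = {j+2..i+j+1}"
  proof -
    have "(\<lambda>v. v + Suc j) ` {1..i} = {1 + Suc j..i + Suc j}" by (rule image_add_atLeastAtMost')
    also have "\<dots> = {j+2..i+j+1}" by simp
    finally show ?thesis using sQ by (simp add: set_shift)
  qed
  have "distinct (shift (Suc j) Q)" using dQ by simp
  moreover have "set (shift (Suc j) Q) \<inter> set (P @ [Suc j]) = {}" using s1 sP by auto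
  moreover have "distinct (P @ [Suc j])" using dP sP by auto
  ultimately have "distinct (DS Q P)" by (simp add: DS_def lP)
  moreover have "set (DS Q P) = {1..i+j+1}" unfolding DS_def using s1 sP lP by auto
  moreover have "length (DS Q P) = i + j + 1" using lQ lP by (simp add: DS_def)
  ultimately show ?thesis by (simp add: perms_def)
qed

lemma DS_avoid:
  assumes "P \<in> perms j" "\<not> contains_132 Q" "\<not> contains_132 P" "Q \<in> perms i"
  shows "\<not> contains_132 (DS Q P)"
proof
  assume c: "contains_132 (DS Q P)"
  have lP: "length P = j" and sP: "set P = {1..j}" using assms by (auto simp: perms_def)
  have sQ: "set Q = {1..i}" using assms by (auto simp: perms_def)
  have "\<forall>a\<in>set (shift (Suc j) Q). \<forall>c\<in>set (P @ [Suc j]). c < a"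
    using sP lP sQ by (auto simp: set_shift)
  moreover have "contains_132 (shift (Suc j) Q @ (P @ [Suc j]))" using c by (simp add: DS_def lP)
  ultimately have "contains_132 (shift (Suc j) Q) \<or> contains_132 (P @ [Suc j])"
    by (rule c132_append_gt)
  moreover have "\<forall>x\<in>set P. x < Suc j" using sP lP by auto
  ultimately show False using assms c132_snoc_max by auto
qed

lemma DS_asc:
  assumes "Q \<in> perms i" "P \<in> perms j"
  shows "asc (DS Q P) = asc Q + asc P + (if P = [] then 0 else 1)"
proof -
  have lP: "length P = j" and sP: "set P = {1..j}" using assms by (auto simp: perms_def)
  have sQ: "set Q = {1..i}" using assms by (auto simp: perms_def)
  have a1: "asc (P @ [Suc j]) = asc P + (if P = [] then 0 else 1)"
  proof (cases "P = []")
    case False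
    then have "last P \<in> set P" by simp
    then have "last P < Suc j" using sP by auto
    then show ?thesis using False by (simp add: asc_append)
  qed simp
  have a2: "\<not> (shift (Suc j) Q \<noteq> [] \<and> last (shift (Suc j) Q) < hd (P @ [Suc j]))"
  proof
    assume H: "shift (Suc j) Q \<noteq> [] \<and> last (shift (Suc j) Q) < hd (P @ [Suc j])"
    have "hd (P @ [Suc j]) \<le> Suc j"
    proof (cases P)
      case (Cons a list)
      then have "a \<in> set P" by simp
      then have "a \<in> {1..j}" using sP by simp
      then show ?thesis using Cons by simp
    qed simp
    moreover have "last (shift (Suc j) Q) \<ge> Suc j" using H by (simp add: last_shift)
    ultimately show False using H by simp
  qed
  have "asc (DS Q P) = asc (shift (Suc j) Q) + asc (P @ [Suc j])"
    unfolding DS_def lP using a2 by (simp only: asc_append) simp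
  then show ?thesis using a1 by simp
qed

lemma DS_rlm:
  assumes "P \<in> perms j"
  shows "rlm (DS Q P) = rlm P + 1"
proof -
  have lP: "length P = j" and sP: "set P = {1..j}" using assms by (auto simp: perms_def)
  have "rlm (shift (Suc j) Q @ P @ [Suc j]) = rlm (P @ [Suc j])"
    by (rule rlm_append_ge) (auto simp: set_shift)
  also have "\<dots> = rlm P + rlm [Suc j]" by (rule rlm_append_lt) (use sP in auto)
  finally show ?thesis unfolding DS_def lP by simp
qed

lemma DS_inj:
  assumes "DS Q1 P1 = DS Q2 P2" shows "Q1 = Q2 \<and> P1 = P2"
proof -
  have l: "length P1 = length P2" using arg_cong[OF assms, of last] by (simp add: DS_def)
  have "length Q1 = length Q2" using arg_cong[OF assms, of length] l by (simp add: DS_def)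
  then have "shift (Suc (length P1)) Q1 = shift (Suc (length P1)) Q2 \<and> P1 @ [Suc (length P1)] = P2 @ [Suc (length P1)]"
    using assms l by (simp add: DS_def)
  then show ?thesis using shift_inj by blast
qed

lemma shift_sub: "\<forall>x\<in>set xs. (l::nat) \<le> x \<Longrightarrow> shift l (map (\<lambda>v. v - l) xs) = xs"
  unfolding shift_def by (induction xs) auto

lemma sep_filter:
  "(\<forall>i j. i < j \<longrightarrow> j < length xs \<longrightarrow> \<not> (xs!i < l \<and> l < xs!j)) \<Longrightarrow> l \<notin> set xs \<Longrightarrow>
   xs = filter (\<lambda>v. l < v) xs @ filter (\<lambda>v. v < (l::nat)) xs"
proof (induction xs)
  case Nil then show ?case by simp
next
  case (Cons a xs)
  have H: "\<forall>i j. i < j \<longrightarrow> j < length xs \<longrightarrow> \<not> (xs!i < l \<and> l < xs!j)"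
  proof (intro allI impI)
    fix i j assume "i < j" "j < length xs"
    then show "\<not> (xs!i < l \<and> l < xs!j)" using Cons.prems(1)[rule_format, of "Suc i" "Suc j"] by simp
  qed
  show ?case
  proof (cases "l < a")
    case True
    then have "filter (\<lambda>v. l < v) (a#xs) = a # filter (\<lambda>v. l < v) xs"
      "filter (\<lambda>v. v < l) (a#xs) = filter (\<lambda>v. v < l) xs" by auto
    then show ?thesis using Cons.IH[OF H] Cons.prems by simp
  next
    case False
    then have al: "a < l" using Cons.prems(2) by simp
    have "\<forall>x\<in>set xs. x < l"
    proof
      fix x assume "x \<in> set xs"
      then obtain k where k: "k < length xs" "xs!k = x" by (auto simp: in_set_conv_nth)
      then have "\<not> (l < x)" using Cons.prems(1)[rule_format, of 0 "Suc k"] al by simp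
      moreover have "x \<noteq> l" using Cons.prems(2) \<open>x \<in> set xs\<close> by auto
      ultimately show "x < l" by simp
    qed
    then have "filter (\<lambda>v. l < v) xs = []" "filter (\<lambda>v. v < l) xs = xs"
      by (auto simp: filter_empty_conv)
    then show ?thesis using al by simp
  qed
qed

lemma DS_surj:
  assumes "p \<in> perms (Suc m)" "\<not> contains_132 p"
  shows "\<exists>Q P. Q \<in> perms (length Q) \<and> P \<in> perms (length P) \<and> length Q + length P = m \<and>
    \<not> contains_132 Q \<and> \<not> contains_132 P \<and> p = DS Q P"
proof -
  have lp: "length p = Suc m" and dp: "distinct p" and sp: "set p = {1..Suc m}"
    using assms by (auto simp: perms_def)
  define l where "l = last p"
  define B where "B = butlast p"
  have pne: "p \<noteq> []" using lp by auto
  have pB: "p = B @ [l]" unfolding B_def l_def using pne by simp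
  have lB: "length B = m" using lp by (simp add: B_def)
  have dB: "distinct B" and lnB: "l \<notin> set B" using dp unfolding pB by auto
  have sB: "set B = {1..Suc m} - {l}" using sp lnB unfolding pB by auto
  have lin: "l \<in> {1..Suc m}" using sp unfolding pB by auto
  have sepH: "\<forall>i j. i < j \<longrightarrow> j < length B \<longrightarrow> \<not> (B!i < l \<and> l < B!j)"
  proof (intro allI impI notI)
    fix i j assume H: "i < j" "j < length B" "B!i < l \<and> l < B!j"
    have "contains_132 (B @ [l])" unfolding contains_132_def
      using H by (intro exI[of _ i] exI[of _ j] exI[of _ "length B"]) (auto simp: nth_append)
    then show False using assms pB by simp
  qed
  define Qf where "Qf = filter (\<lambda>v. l < v) B"
  define P where "P = filter (\<lambda>v. v < l) B"
  define Q where "Q = map (\<lambda>v. v - l) Qf"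
  have BQP: "B = Qf @ P" unfolding Qf_def P_def by (rule sep_filter[OF sepH lnB])
  have sP: "set P = {1..l - 1}"
  proof (rule set_eqI)
    fix x
    have "x \<in> set P \<longleftrightarrow> x \<in> set B \<and> x < l" by (simp add: P_def)
    also have "\<dots> \<longleftrightarrow> x \<in> {1..l-1}" unfolding sB using lin by (simp, linarith)
    finally show "x \<in> set P \<longleftrightarrow> x \<in> {1..l-1}" .
  qed
  have dP: "distinct P" unfolding P_def using dB by simp
  have lP: "length P = l - 1"
  proof -
    have "length P = card (set P)" using distinct_card[OF dP] by simp
    also have "\<dots> = card {1..l-1}" using sP by simp
    also have "\<dots> = l - 1" by simp
    finally show ?thesis .
  qed
  have sQf: "set Qf = {l+1..Suc m}"
  proof (rule set_eqI)
    fix x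
    have "x \<in> set Qf \<longleftrightarrow> x \<in> set B \<and> l < x" by (simp add: Qf_def)
    also have "\<dots> \<longleftrightarrow> x \<in> {l+1..Suc m}" unfolding sB using lin by (simp, linarith)
    finally show "x \<in> set Qf \<longleftrightarrow> x \<in> {l+1..Suc m}" .
  qed
  have dQf: "distinct Qf" unfolding Qf_def using dB by simp
  have QfQ: "Qf = shift l Q" unfolding Q_def by (rule sym, rule shift_sub) (use sQf in auto)
  have dQ: "distinct Q" using dQf QfQ by simp
  have sQ: "set Q = {1..Suc m - l}"
  proof -
    have "\<forall>x. x \<in> set Q \<longleftrightarrow> x + l \<in> set Qf" using QfQ by (auto simp: set_shift)
    then show ?thesis using sQf lin by (auto; linarith)
  qed
  have lQ: "length Q = Suc m - l"
  proof -
    have "length Q = card (set Q)" using distinct_card[OF dQ] by simp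
    also have "\<dots> = card {1..Suc m - l}" using sQ by simp
    also have "\<dots> = Suc m - l" by simp
    finally show ?thesis .
  qed
  have lSuc: "Suc (length P) = l" using lP lin by simp
  have pDS: "p = DS Q P" unfolding DS_def lSuc using pB BQP QfQ by simp
  have "\<not> contains_132 P" using assms(2) unfolding pB BQP
    by (metis append_assoc c132_append1 c132_append2)
  moreover have "\<not> contains_132 Q" using assms(2) unfolding pB BQP QfQ
    by (metis append_assoc c132_append1 c132_shift)
  moreover have "Q \<in> perms (length Q)" using dQ sQ lQ by (simp add: perms_def)
  moreover have "P \<in> perms (length P)" using dP sP lP by (simp add: perms_def)
  moreover have "length Q + length P = m" using lQ lP lin by simp
  ultimately show ?thesis using pDS by blast
qed



type_synonym seg = "nat \<times> nat \<times> nat"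

fun okS :: "nat \<Rightarrow> nat \<Rightarrow> bool \<Rightarrow> seg list \<Rightarrow> bool" where
  "okS a pv pz [] = True"
| "okS a pv pz ((v,s,t)#r) = (0 < v \<and> v \<le> Suc a \<and> (if pz then pv \<le> v else pv < v) \<and> okS (Suc a) v (0 < t) r)"

fun validL :: "seg list \<Rightarrow> bool" where
  "validL [] = False"
| "validL ((v,s,t)#r) = (v = 0 \<and> s = 0 \<and> okS 0 0 (0 < t) r)"

fun segL :: "seg \<Rightarrow> nat list" where
  "segL (v,s,t) = replicate (Suc s) v @ replicate t 0"

definition decL :: "seg list \<Rightarrow> nat list" where
  "decL L = concat (map segL L)"

fun hasZ :: "seg \<Rightarrow> bool" where
  "hasZ (v,s,t) = (v = 0 \<or> 0 < t)"

definition ascL :: "seg list \<Rightarrow> nat" where "ascL L = length L - 1"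
definition rlmL :: "seg list \<Rightarrow> nat" where
  "rlmL L = Suc (length (takeWhile (\<lambda>x. \<not> hasZ x) (rev L)))"

definition isA :: "nat list \<Rightarrow> bool" where
  "isA x \<longleftrightarrow> is_ascent_seq x \<and> \<not> contains_021 x"

lemma okS_append: "okS a pv pz (A @ B) \<longleftrightarrow> okS a pv pz A \<and>
   okS (a + length A) (if A = [] then pv else fst (last A)) (if A = [] then pz else 0 < snd (snd (last A))) B"
  by (induction a pv pz A rule: okS.induct) auto

lemma decL_append[simp]: "decL (A @ B) = decL A @ decL B" by (simp add: decL_def)
lemma decL_Cons[simp]: "decL (x # B) = segL x @ decL B" by (simp add: decL_def)
lemma decL_Nil[simp]: "decL [] = []" by (simp add: decL_def)

lemma is_asc_snoc: "is_ascent_seq (xs @ [v]) \<longleftrightarrow> is_ascent_seq xs \<and> (xs = [] \<longrightarrow> v = 0) \<and> (xs \<noteq> [] \<longrightarrow> v \<le> asc xs + 1)"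
proof -
  have A: "(xs @ [v] \<noteq> [] \<longrightarrow> (xs @ [v]) ! 0 = 0) \<longleftrightarrow> (xs \<noteq> [] \<longrightarrow> xs ! 0 = 0) \<and> (xs = [] \<longrightarrow> v = 0)"
    by (cases xs) auto
  have B: "(\<forall>i. 0 < i \<and> i < length (xs @ [v]) \<longrightarrow> (xs @ [v]) ! i \<le> asc (take i (xs @ [v])) + 1) \<longleftrightarrow>
      (\<forall>i. 0 < i \<and> i < length xs \<longrightarrow> xs ! i \<le> asc (take i xs) + 1) \<and> (xs \<noteq> [] \<longrightarrow> v \<le> asc xs + 1)"
  proof
    assume H: "\<forall>i. 0 < i \<and> i < length (xs @ [v]) \<longrightarrow> (xs @ [v]) ! i \<le> asc (take i (xs @ [v])) + 1"
    show "(\<forall>i. 0 < i \<and> i < length xs \<longrightarrow> xs ! i \<le> asc (take i xs) + 1) \<and> (xs \<noteq> [] \<longrightarrow> v \<le> asc xs + 1)"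
    proof (intro conjI allI impI)
      fix i assume "0 < i \<and> i < length xs"
      then show "xs ! i \<le> asc (take i xs) + 1" using H[rule_format, of i] by (simp add: nth_append)
    next
      assume "xs \<noteq> []"
      then show "v \<le> asc xs + 1" using H[rule_format, of "length xs"] by simp
    qed
  next
    assume H: "(\<forall>i. 0 < i \<and> i < length xs \<longrightarrow> xs ! i \<le> asc (take i xs) + 1) \<and> (xs \<noteq> [] \<longrightarrow> v \<le> asc xs + 1)"
    show "\<forall>i. 0 < i \<and> i < length (xs @ [v]) \<longrightarrow> (xs @ [v]) ! i \<le> asc (take i (xs @ [v])) + 1"
    proof (intro allI impI)
      fix i assume i: "0 < i \<and> i < length (xs @ [v])"
      show "(xs @ [v]) ! i \<le> asc (take i (xs @ [v])) + 1"
      proof (cases "i < length xs")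
        case True then show ?thesis using H i by (simp add: nth_append)
      next
        case False
        then have "i = length xs" using i by simp
        then show ?thesis using H i by auto
      qed
    qed
  qed
  show ?thesis unfolding is_ascent_seq_def using A B by (auto simp: nth_append)
qed

lemma c021_snoc: "contains_021 (xs @ [v]) \<longleftrightarrow> contains_021 xs \<or> (\<exists>i j. i < j \<and> j < length xs \<and> xs!i < v \<and> v < xs!j)"
proof
  assume "contains_021 (xs @ [v])"
  then obtain i j k where H: "i < j" "j < k" "k < length (xs @ [v])" "(xs@[v])!i < (xs@[v])!k" "(xs@[v])!k < (xs@[v])!j"
    unfolding contains_021_def by blast
  show "contains_021 xs \<or> (\<exists>i j. i < j \<and> j < length xs \<and> xs!i < v \<and> v < xs!j)"
  proof (cases "k = length xs")
    case True then show ?thesis using H by (auto simp: nth_append)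
  next
    case False then show ?thesis using H unfolding contains_021_def
      by (intro disjI1 exI[of _ i] exI[of _ j] exI[of _ k]) (auto simp: nth_append)
  qed
next
  assume "contains_021 xs \<or> (\<exists>i j. i < j \<and> j < length xs \<and> xs!i < v \<and> v < xs!j)"
  then show "contains_021 (xs @ [v])"
  proof
    assume "contains_021 xs" then show ?thesis by (simp add: c021_eq_132 c132_append1)
  next
    assume "\<exists>i j. i < j \<and> j < length xs \<and> xs!i < v \<and> v < xs!j"
    then obtain i j where "i < j" "j < length xs" "xs!i < v" "v < xs!j" by blast
    then show ?thesis unfolding contains_021_def
      by (intro exI[of _ i] exI[of _ j] exI[of _ "length xs"]) (auto simp: nth_append)
  qed
qed

lemma isA_Nil: "isA []" by (simp add: isA_def is_ascent_seq_def contains_021_def)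

lemma isA_hd: "isA xs \<Longrightarrow> xs \<noteq> [] \<Longrightarrow> xs ! 0 = 0"
  by (simp add: isA_def is_ascent_seq_def)

lemma isA_snoc: "isA (xs @ [v]) \<longleftrightarrow> (xs = [] \<and> v = 0) \<or>
   (xs \<noteq> [] \<and> isA xs \<and> v \<le> asc xs + 1 \<and> (0 < v \<longrightarrow> (\<forall>u\<in>set xs. u \<le> v)))"
proof (cases "xs = []")
  case True then show ?thesis
    by (auto simp: isA_def is_asc_snoc c021_snoc is_ascent_seq_def contains_021_def)
next
  case False
  show ?thesis
  proof (cases "isA xs")
    case False2: False
    then show ?thesis using False by (auto simp: isA_def is_asc_snoc c021_snoc)
  next
    case True
    have x0: "xs ! 0 = 0" using isA_hd[OF True False] .
    have "(\<exists>i j. i < j \<and> j < length xs \<and> xs!i < v \<and> v < xs!j) \<longleftrightarrow> (0 < v \<and> (\<exists>u\<in>set xs. v < u))"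
    proof
      assume "\<exists>i j. i < j \<and> j < length xs \<and> xs!i < v \<and> v < xs!j"
      then obtain i j where "i < j" "j < length xs" "xs!i < v" "v < xs!j" by blast
      then show "0 < v \<and> (\<exists>u\<in>set xs. v < u)" by (auto intro: nth_mem)
    next
      assume "0 < v \<and> (\<exists>u\<in>set xs. v < u)"
      then obtain j where j: "0 < v" "j < length xs" "v < xs!j" by (auto simp: in_set_conv_nth)
      have "j \<noteq> 0"
      proof
        assume "j = 0" then show False using j x0 by simp
      qed
      then show "\<exists>i j. i < j \<and> j < length xs \<and> xs!i < v \<and> v < xs!j"
        using j x0 by (intro exI[of _ 0] exI[of _ j]) auto
    qed
    then show ?thesis using True False by (auto simp: isA_def is_asc_snoc c021_snoc not_less)
  qed
qed

lemma asc_rep'[simp]: "asc (a # replicate n a) = 0"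
  using asc_replicate[of "Suc n" a] by simp
lemma rlm_rep'[simp]: "rlm (a # replicate n a) = 1"
  using rlm_replicate[of n a] by simp

lemma isA_zeros: "isA y \<Longrightarrow> y \<noteq> [] \<Longrightarrow> isA (y @ replicate t 0)"
proof (induction t)
  case 0 then show ?case by simp
next
  case (Suc t)
  have "y @ replicate (Suc t) 0 = (y @ replicate t 0) @ [0]" by (simp add: replicate_append_same[symmetric])
  then show ?case using Suc isA_snoc[of "y @ replicate t 0" 0] by simp
qed

lemma asc_rep_same: "y \<noteq> [] \<Longrightarrow> last y = v \<Longrightarrow> asc (y @ replicate s v) = asc y"
  by (cases s) (auto simp: asc_append)

lemma isA_reps: "isA y \<Longrightarrow> y \<noteq> [] \<Longrightarrow> last y = v \<Longrightarrow> (\<forall>u\<in>set y. u \<le> v) \<Longrightarrow> v \<le> asc y + 1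
   \<Longrightarrow> isA (y @ replicate s v)"
proof (induction s)
  case 0 then show ?case by simp
next
  case (Suc s)
  have e: "y @ replicate (Suc s) v = (y @ replicate s v) @ [v]" by (simp add: replicate_append_same[symmetric])
  have "asc (y @ replicate s v) = asc y" using Suc.prems asc_rep_same by simp
  then show ?case unfolding e using Suc isA_snoc[of "y @ replicate s v" v] by auto
qed

lemma rlm_snoc0: "rlm (ys @ [0]) = 1"
proof -
  have "rlm (ys @ [0]) = rlm [0]" by (rule rlm_append_ge) auto
  then show ?thesis by simp
qed

lemma rlm_append_last: "xs \<noteq> [] \<Longrightarrow> (\<forall>y\<in>set ys. last xs < y) \<Longrightarrow> rlm (xs @ ys) = rlm xs + rlm ys"
proof (induction xs)
  case Nil then show ?case by simp
next
  case (Cons a xs)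
  show ?case
  proof (cases "xs = []")
    case True then show ?thesis using Cons.prems by (simp add: rlm_Cons)
  next
    case False
    have IH: "rlm (xs @ ys) = rlm xs + rlm ys" using Cons.IH False Cons.prems by simp
    have "(\<forall>z\<in>set (xs @ ys). a < z) \<longleftrightarrow> (\<forall>z\<in>set xs. a < z)"
    proof
      assume "\<forall>z\<in>set xs. a < z"
      then have "a < last xs" using False by simp
      then show "\<forall>z\<in>set (xs @ ys). a < z" using \<open>\<forall>z\<in>set xs. a < z\<close> Cons.prems False by fastforce
    qed auto
    then show ?thesis using IH by (simp add: rlm_Cons)
  qed
qed

definition lastV :: "seg list \<Rightarrow> nat" where "lastV L = fst (last L)"
definition lastX :: "seg list \<Rightarrow> nat" where "lastX L = (if hasZ (last L) then 0 else fst (last L))"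

lemma hasZ_iff: "hasZ x \<longleftrightarrow> fst x = 0 \<or> 0 < snd (snd x)" by (cases x) auto

lemma decL_props:
  assumes "okS 0 0 (0 < t0) S"
  shows "isA (decL ((0,0,t0) # S)) \<and> asc (decL ((0,0,t0) # S)) = length S \<and>
    (\<forall>u\<in>set (decL ((0,0,t0) # S)). u \<le> lastV ((0,0,t0) # S)) \<and>
    decL ((0,0,t0) # S) \<noteq> [] \<and>
    last (decL ((0,0,t0) # S)) = lastX ((0,0,t0) # S) \<and>
    rlm (decL ((0,0,t0) # S)) = rlmL ((0,0,t0) # S)"
  using assms
proof (induction S rule: rev_induct)
  case Nil
  have "isA ([0] @ replicate t0 0)"
    by (rule isA_zeros) (use isA_snoc[of "[]" 0] isA_Nil in auto)
  moreover have "rlm (replicate (Suc t0) 0) = 1" by simp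
  ultimately show ?case by (simp add: lastV_def lastX_def rlmL_def)
next
  case (snoc x S)
  obtain v s t where x: "x = (v,s,t)" by (cases x) auto
  define L where "L = (0,0,t0) # S"
  define y where "y = decL L"
  have okS: "okS 0 0 (0 < t0) S" and okx: "0 < v" "v \<le> Suc (length S)"
    and ch: "if hasZ (last L) then lastV L \<le> v else lastV L < v"
    using snoc.prems unfolding x L_def
    by (auto simp: okS_append lastV_def split: if_splits) (cases "last S"; auto split: if_splits)+
  have IH: "isA y" "asc y = length S" "\<forall>u\<in>set y. u \<le> lastV L" "y \<noteq> []" "last y = lastX L" "rlm y = rlmL L"
    using snoc.IH[OF okS] unfolding y_def L_def by auto
  have lv: "lastV L \<le> v" using ch by (auto split: if_splits)
  have lyv: "last y < v" using ch okx IH(5) by (auto simp: lastX_def lastV_def split: if_splits)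
  have dec: "decL ((0,0,t0) # S @ [x]) = (y @ [v]) @ replicate s v @ replicate t 0"
    unfolding x y_def L_def by simp
  have A1: "isA (y @ [v])" using isA_snoc[of y v] IH okx lv by auto
  have A2: "isA ((y @ [v]) @ replicate s v)"
    by (rule isA_reps) (use A1 IH lv okx lyv in \<open>auto simp: asc_append\<close>)
  have A3: "isA (((y @ [v]) @ replicate s v) @ replicate t 0)" by (rule isA_zeros[OF A2]) simp
  have asc1: "asc ((y @ [v]) @ replicate s v @ replicate t 0) = length S + 1"
  proof -
    have "asc (replicate (Suc s) v @ replicate t 0) = 0"
      using asc_append[of "replicate (Suc s) v" "replicate t (0::nat)"] by (cases t) (simp_all del: replicate_Suc)
    then show ?thesis using IH lyv by (simp add: asc_append[of y] del: replicate_Suc) (simp add: asc_append)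
  qed
  have set1: "\<forall>u\<in>set ((y @ [v]) @ replicate s v @ replicate t 0). u \<le> v" using IH lv by auto
  have rlm1: "rlm ((y @ [v]) @ replicate s v @ replicate t 0) = rlmL ((0,0,t0) # S @ [x])"
  proof (cases "t = 0")
    case True
    have "rlm (y @ replicate (Suc s) v) = rlm y + rlm (replicate (Suc s) v)"
      by (rule rlm_append_last) (use IH lyv in auto)
    moreover have "\<not> hasZ x" using True okx x by simp
    ultimately show ?thesis using IH True unfolding L_def rlmL_def by (simp add: x)
  next
    case False
    then obtain t' where "t = Suc t'" by (cases t) auto
    then have "(y @ [v]) @ replicate s v @ replicate t 0 = ((y @ [v]) @ replicate s v @ replicate t' 0) @ [0]"
      by (simp add: replicate_append_same[symmetric])
    then have "rlm ((y @ [v]) @ replicate s v @ replicate t 0) = 1" using rlm_snoc0 by metis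
    then show ?thesis using False x by (simp add: rlmL_def)
  qed
  have last1: "last ((y @ [v]) @ replicate s v @ replicate t 0) = lastX ((0,0,t0) # S @ [x])"
    using okx x by (cases t) (auto simp: lastX_def)
  show ?case using A3 asc1 set1 rlm1 last1 unfolding dec
    by (simp add: lastV_def x)
qed



fun incT :: "seg \<Rightarrow> seg" where "incT (v,s,t) = (v,s,Suc t)"
fun incS :: "seg \<Rightarrow> seg" where "incS (v,s,t) = (v,Suc s,t)"

definition stepF :: "seg list \<Rightarrow> nat \<Rightarrow> seg list" where
  "stepF L w = (if w = 0 then butlast L @ [incT (last L)]
     else if snd (snd (last L)) = 0 \<and> fst (last L) = w then butlast L @ [incS (last L)]
     else L @ [(w,0,0)])"

fun enc :: "nat list \<Rightarrow> seg list" where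
  "enc [] = [(0,0,0)]"
| "enc (a # xs) = foldl stepF [(0,0,0)] xs"

lemma stepF_zero: "stepF L 0 = butlast L @ [incT (last L)]" by (simp add: stepF_def)
lemma stepF_rep: "0 < w \<Longrightarrow> snd (snd (last L)) = 0 \<Longrightarrow> fst (last L) = w \<Longrightarrow> stepF L w = butlast L @ [incS (last L)]"
  by (simp add: stepF_def)
lemma stepF_new: "0 < w \<Longrightarrow> \<not> (snd (snd (last L)) = 0 \<and> fst (last L) = w) \<Longrightarrow> stepF L w = L @ [(w,0,0)]"
  unfolding stepF_def by (intro trans[OF if_not_P] if_not_P) auto

lemma foldl_zeros: "foldl stepF (A @ [(v,s,k)]) (replicate j 0) = A @ [(v,s,k+j)]"
  by (induction j arbitrary: k) (auto simp: stepF_def)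

lemma foldl_vs: "0 < v \<Longrightarrow> foldl stepF (A @ [(v,k,0)]) (replicate j v) = A @ [(v,k+j,0)]"
  by (induction j arbitrary: k) (auto simp: stepF_def)

lemma okS_last_cong: "okS a pv pz (S @ [(v,s,t)]) = okS a pv pz (S @ [(v,s',t')])"
  by (simp add: okS_append)

lemma okS_snoc_iff: "okS a pv pz (S @ [(v,s,t)]) \<longleftrightarrow> okS a pv pz S \<and> 0 < v \<and> v \<le> Suc (a + length S) \<and>
   (if (if S = [] then pz else 0 < snd (snd (last S))) then (if S = [] then pv else fst (last S)) \<le> v
    else (if S = [] then pv else fst (last S)) < v)"
  by (simp add: okS_append)

lemma enc_decL_aux:
  assumes "okS 0 0 (0 < t0) S"
  shows "foldl stepF [(0,0,0)] (replicate t0 0 @ decL S) = (0,0,t0) # S"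
  using assms
proof (induction S rule: rev_induct)
  case Nil
  show ?case using foldl_zeros[of "[]" 0 0 0 t0] by simp
next
  case (snoc x S)
  obtain v s t where x: "x = (v,s,t)" by (cases x) auto
  have okS: "okS 0 0 (0 < t0) S" using snoc.prems x by (simp add: okS_append)
  have IH: "foldl stepF [(0,0,0)] (replicate t0 0 @ decL S) = (0,0,t0) # S" using snoc.IH[OF okS] .
  have c: "0 < v" "\<not> (snd (snd (last ((0,0,t0) # S))) = 0 \<and> fst (last ((0,0,t0) # S)) = v)"
    using snoc.prems x by (auto simp: okS_snoc_iff split: if_splits)
  have st: "stepF ((0,0,t0) # S) v = ((0,0,t0) # S) @ [(v,0,0)]"
    by (rule stepF_new[OF c])
  have "foldl stepF [(0,0,0)] (replicate t0 0 @ decL (S @ [x]))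
      = foldl stepF (stepF ((0,0,t0) # S) v) (replicate s v @ replicate t 0)"
    using IH x by simp
  also have "\<dots> = foldl stepF (((0,0,t0) # S) @ [(v,s,0)]) (replicate t 0)"
    using st foldl_vs[OF c(1), of "(0,0,t0) # S" 0 s] by simp
  also have "\<dots> = ((0,0,t0) # S) @ [(v,s,t)]" using foldl_zeros[of "(0,0,t0) # S" v s 0 t] by simp
  finally show ?case using x by simp
qed

lemma validL_cases: "validL L \<Longrightarrow> \<exists>t0 S. L = (0,0,t0) # S \<and> okS 0 0 (0 < t0) S"
  by (cases L rule: validL.cases) auto

lemma enc_decL: "validL L \<Longrightarrow> enc (decL L) = L"
proof -
  assume "validL L"
  then obtain t0 S where L: "L = (0,0,t0) # S" "okS 0 0 (0 < t0) S" using validL_cases by blast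
  have "decL L = 0 # (replicate t0 0 @ decL S)" using L by simp
  then show ?thesis using enc_decL_aux[OF L(2)] L by simp
qed

lemma segL_incT: "segL (incT x) = segL x @ [0]"
  by (cases x) (simp add: replicate_append_same[symmetric])

lemma segL_incS: "snd (snd x) = 0 \<Longrightarrow> segL (incS x) = segL x @ [fst x]"
  by (cases x) (simp add: replicate_append_same[symmetric])

lemma lastV_mem: "S \<noteq> [] \<Longrightarrow> fst (last S) \<in> set (decL S)"
proof -
  assume "S \<noteq> []"
  then have "S = butlast S @ [last S]" by simp
  moreover have "fst (last S) \<in> set (segL (last S))" by (cases "last S") auto
  ultimately show ?thesis by (metis decL_append decL_Cons decL_Nil append_Nil2 in_set_conv_decomp set_append Un_iff)
qed

lemma enc_snoc: "xs \<noteq> [] \<Longrightarrow> enc (xs @ [w]) = stepF (enc xs) w"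
  by (cases xs) auto

lemma decL_enc: "isA x \<Longrightarrow> x \<noteq> [] \<Longrightarrow> validL (enc x) \<and> decL (enc x) = x"
proof (induction x rule: rev_induct)
  case Nil then show ?case by simp
next
  case (snoc w x)
  show ?case
  proof (cases "x = []")
    case True
    then have "w = 0" using snoc.prems isA_snoc[of "[]" w] by simp
    then show ?thesis using True by simp
  next
    case xne: False
    have isx: "isA x" and wle: "w \<le> asc x + 1" and wge: "0 < w \<longrightarrow> (\<forall>u\<in>set x. u \<le> w)"
      using snoc.prems xne isA_snoc by auto
    have IH: "validL (enc x)" "decL (enc x) = x" using snoc.IH isx xne by auto
    obtain t0 S where L: "enc x = (0,0,t0) # S" "okS 0 0 (0 < t0) S" using validL_cases[OF IH(1)] by blast
    have props: "asc x = length S" using decL_props[OF L(2)] IH(2) L(1) by simp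
    have xdec: "x = replicate (Suc t0) 0 @ decL S" using IH(2) L(1) by simp
    have es: "enc (x @ [w]) = stepF ((0,0,t0) # S) w" using enc_snoc[OF xne] L(1) by simp
    show ?thesis
    proof (cases "w = 0")
      case True
      show ?thesis
      proof (cases "S = []")
        case True
        then show ?thesis using es \<open>w = 0\<close> xdec by (simp add: stepF_zero replicate_append_same[symmetric])
      next
        case False
        have Sd: "S = butlast S @ [last S]" using False by simp
        obtain v s t where ls: "last S = (v,s,t)" by (cases "last S") auto
        have "okS 0 0 (0 < t0) (butlast S @ [(v,s,t)])" using L(2) Sd ls by metis
        then have ok2: "okS 0 0 (0 < t0) (butlast S @ [incT (last S)])"
          using ls okS_last_cong[of 0 0 "0<t0" "butlast S" v s t s "Suc t"] by simp
        have "stepF ((0,0,t0) # S) w = (0,0,t0) # (butlast S @ [incT (last S)])"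
          using True False by (simp add: stepF_zero)
        moreover have "decL (butlast S @ [incT (last S)]) = decL S @ [0]"
          using Sd segL_incT by (metis append.assoc decL_append decL_Cons decL_Nil append_Nil2)
        ultimately show ?thesis using es ok2 xdec True by simp
      qed
    next
      case wpos: False
      show ?thesis
      proof (cases "snd (snd (last ((0,0,t0) # S))) = 0 \<and> fst (last ((0,0,t0) # S)) = w")
        case True
        then have Sne: "S \<noteq> []" using wpos by auto
        have Sd: "S = butlast S @ [last S]" using Sne by simp
        obtain v s t where ls: "last S = (v,s,t)" by (cases "last S") auto
        have "okS 0 0 (0 < t0) (butlast S @ [(v,s,t)])" using L(2) Sd ls by metis
        then have ok2: "okS 0 0 (0 < t0) (butlast S @ [incS (last S)])"
          using ls okS_last_cong[of 0 0 "0<t0" "butlast S" v s t "Suc s" t] by simp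
        have "stepF ((0,0,t0) # S) w = (0,0,t0) # (butlast S @ [incS (last S)])"
          using stepF_rep[of w "(0,0,t0) # S"] True wpos Sne by simp
        moreover have "decL (butlast S @ [incS (last S)]) = decL S @ [w]"
          using Sd segL_incS[of "last S"] True Sne by (metis append.assoc decL_append decL_Cons decL_Nil append_Nil2 last_ConsR)
        ultimately show ?thesis using es ok2 xdec by simp
      next
        case False
        have st: "stepF ((0,0,t0) # S) w = (0,0,t0) # (S @ [(w,0,0)])"
          using stepF_new[of w "(0,0,t0) # S"] False wpos by simp
        have allw: "\<forall>u\<in>set x. u \<le> w" using wge wpos by simp
        have "okS 0 0 (0 < t0) (S @ [(w,0,0)])"
        proof (cases "S = []")
          case True then show ?thesis using wpos wle props by simp
        next
          case Sne: False
          have lm: "fst (last S) \<in> set x" using lastV_mem[OF Sne] xdec by simp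
          have "fst (last S) \<le> w" using allw lm by simp
          moreover have "snd (snd (last S)) = 0 \<longrightarrow> fst (last S) \<noteq> w" using False Sne by auto
          ultimately show ?thesis using L(2) wpos wle props Sne by (auto simp: okS_snoc_iff)
        qed
        then show ?thesis using es st xdec by simp
      qed
    qed
  qed
qed

lemma AS_eq: "ascent_seqs_avoid_021 n = {x. length x = n \<and> isA x}"
  by (auto simp: ascent_seqs_avoid_021_def isA_def)

lemma validL_props: "validL L \<Longrightarrow> isA (decL L) \<and> asc (decL L) = ascL L \<and> rlm (decL L) = rlmL L \<and> decL L \<noteq> []"
proof -
  assume "validL L"
  then obtain t0 S where L: "L = (0,0,t0) # S" "okS 0 0 (0 < t0) S" using validL_cases by blast
  show ?thesis using decL_props[OF L(2)] L(1) by (simp add: ascL_def)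
qed

lemma trans_bij: "0 < n \<Longrightarrow> bij_betw decL {L. validL L \<and> length (decL L) = n} (ascent_seqs_avoid_021 n)"
  unfolding bij_betw_def AS_eq
proof
  show "inj_on decL {L. validL L \<and> length (decL L) = n}"
    by (rule inj_on_inverseI[of _ enc]) (simp add: enc_decL)
next
  assume n: "0 < n"
  show "decL ` {L. validL L \<and> length (decL L) = n} = {x. length x = n \<and> isA x}"
  proof
    show "decL ` {L. validL L \<and> length (decL L) = n} \<subseteq> {x. length x = n \<and> isA x}"
      using validL_props by auto
  next
    show "{x. length x = n \<and> isA x} \<subseteq> decL ` {L. validL L \<and> length (decL L) = n}"
    proof
      fix x assume "x \<in> {x. length x = n \<and> isA x}"
      then have "length x = n" "isA x" "x \<noteq> []" using n by auto
      then show "x \<in> decL ` {L. validL L \<and> length (decL L) = n}"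
        using decL_enc[of x] by (intro image_eqI[of _ _ "enc x"]) auto
    qed
  qed
qed



fun addV :: "nat \<Rightarrow> seg \<Rightarrow> seg" where "addV c (v,s,t) = (v + c, s, t)"
fun subV :: "nat \<Rightarrow> seg \<Rightarrow> seg" where "subV c (v,s,t) = (v - c, s, t)"
fun decT :: "seg \<Rightarrow> seg" where "decT (v,s,t) = (v,s,t - 1)"

lemma okS_change_prev: "okS a pv pz S \<Longrightarrow> (S \<noteq> [] \<Longrightarrow> (if pz' then pv' \<le> fst (hd S) else pv' < fst (hd S))) \<Longrightarrow> okS a pv' pz' S"
  by (cases S) auto

lemma okS_shift: "okS a pv pz S \<Longrightarrow> okS (a + m) (pv + m) pz (map (addV m) S)"
proof (induction S arbitrary: a pv pz)
  case Nil then show ?case by simp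
next
  case (Cons x S)
  obtain v s t where x: "x = (v,s,t)" by (cases x) auto
  show ?case using Cons.IH[of "Suc a" v "0 < t"] Cons.prems x by auto
qed

lemma okS_unshift: "okS (a + m) (pv + m) pz (map (addV m) S) \<Longrightarrow> (\<forall>x\<in>set S. 0 < fst x) \<Longrightarrow> okS a pv pz S"
proof (induction S arbitrary: a pv pz)
  case Nil then show ?case by simp
next
  case (Cons x S)
  obtain v s t where x: "x = (v,s,t)" by (cases x) auto
  show ?case using Cons.IH[of "Suc a" v "0 < t"] Cons.prems x by (auto split: if_splits)
qed

lemma okS_pos: "okS a pv pz S \<Longrightarrow> x \<in> set S \<Longrightarrow> 0 < fst x"
  by (induction a pv pz S rule: okS.induct) auto

lemma okS_mono_hd: "okS a pv pz S \<Longrightarrow> x \<in> set S \<Longrightarrow> fst (hd S) \<le> fst x"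
proof (induction a pv pz S arbitrary: x rule: okS.induct)
  case (1 a pv pz) then show ?case by simp
next
  case (2 a pv pz v s t r)
  show ?case
  proof (cases "x = (v,s,t)")
    case False
    then have xr: "x \<in> set r" using 2 by simp
    then have rne: "r \<noteq> []" by auto
    have "fst (hd r) \<le> fst x" using 2 xr by simp
    moreover have "v \<le> fst (hd r)" using 2(2) rne by (cases r) (auto split: if_splits)
    ultimately show ?thesis by simp
  qed simp
qed

fun pr :: "nat \<Rightarrow> nat \<Rightarrow> seg list \<Rightarrow> seg list" where
  "pr v s [] = [(v,s,0)]"
| "pr v s ((v',s',t')#r) = (v,s,t') # pr (if t' = 0 then Suc v' else v') s' r"

fun unpr :: "seg list \<Rightarrow> nat \<times> seg list" where
  "unpr [] = (0, [])"
| "unpr [(v,s,t)] = (s, [])"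
| "unpr ((v,s,t) # y # r) = (s, (fst y - (if t = 0 then 1 else 0), fst (unpr (y # r)), t) # snd (unpr (y # r)))"

lemma pr_ne'[simp]: "[] \<noteq> pr v s S" by (cases S) auto
lemma pr_ne[simp]: "pr v s S \<noteq> []" by (cases S) auto
lemma hd_pr[simp]: "hd (pr v s S) = (v, s, (if S = [] then 0 else snd (snd (hd S))))"
  by (cases S) auto

lemma unpr_pr: "unpr (pr v s S) = (s, S)"
proof (induction v s S rule: pr.induct)
  case (1 v s) then show ?case by simp
next
  case (2 v s v' s' t' r)
  obtain y q where e: "pr (if t' = 0 then Suc v' else v') s' r = y # q" by (cases "pr (if t' = 0 then Suc v' else v') s' r") auto
  have "fst y = (if t' = 0 then Suc v' else v')" using hd_pr[of "(if t' = 0 then Suc v' else v')" s' r] e by simp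
  then show ?case using 2 e by simp
qed

lemma okS_pr: "okS a pv pz S \<Longrightarrow> 0 < v \<Longrightarrow> v \<le> Suc a \<Longrightarrow> (S \<noteq> [] \<Longrightarrow> v \<le> fst (hd S)) \<Longrightarrow>
   (if qz then qv \<le> v else qv < v) \<Longrightarrow> okS a qv qz (pr v s S)"
proof (induction S arbitrary: a pv pz v s qv qz)
  case Nil then show ?case by simp
next
  case (Cons x r)
  obtain v' s' t' where x: "x = (v',s',t')" by (cases x) auto
  have o: "0 < v'" "v' \<le> Suc a" "okS (Suc a) v' (0 < t') r" "if pz then pv \<le> v' else pv < v'"
    using Cons.prems(1) x by auto
  have vv: "v \<le> v'" using Cons.prems(4) x by simp
  have "okS (Suc a) v (0 < t') (pr (if t' = 0 then Suc v' else v') s' r)"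
  proof (rule Cons.IH[OF o(3)])
    show "0 < (if t' = 0 then Suc v' else v')" using o by simp
    show "(if t' = 0 then Suc v' else v') \<le> Suc (Suc a)" using o by simp
    show "r \<noteq> [] \<Longrightarrow> (if t' = 0 then Suc v' else v') \<le> fst (hd r)"
      using o(3) by (cases r) (auto split: if_splits)
    show "if 0 < t' then v \<le> (if t' = 0 then Suc v' else v') else v < (if t' = 0 then Suc v' else v')"
      using vv by simp
  qed
  then show ?case using Cons.prems x by simp
qed

lemma t_pr: "map (\<lambda>x. snd (snd x)) (pr v s S) = map (\<lambda>x. snd (snd x)) S @ [0]"
  by (induction v s S rule: pr.induct) auto

lemma pos_pr: "okS a pv pz S \<Longrightarrow> 0 < v \<Longrightarrow> x \<in> set (pr v s S) \<Longrightarrow> 0 < fst x"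
proof (induction v s S arbitrary: a pv pz rule: pr.induct)
  case (1 v s) then show ?case by simp
next
  case (2 v s v' s' t' r)
  show ?case using 2 by (auto split: if_splits)
qed

lemma length_segL: "length (segL x) = Suc (fst (snd x)) + snd (snd x)"
  by (cases x) simp

lemma length_decL_pr: "length (decL (pr v s S)) = Suc s + length (decL S)"
  by (induction v s S rule: pr.induct) auto

lemma pr_unpr: "okS a qv qz q \<Longrightarrow> q \<noteq> [] \<Longrightarrow> snd (snd (last q)) = 0 \<Longrightarrow>
   pr (fst (hd q)) (fst (unpr q)) (snd (unpr q)) = q"
proof (induction q arbitrary: a qv qz rule: unpr.induct)
  case 1 then show ?case by simp
next
  case (2 v s t) then show ?case by simp
next
  case (3 v s t y r)
  obtain v' s' t' where y: "y = (v',s',t')" by (cases y) auto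
  have ok: "okS (Suc a) v (0 < t) (y # r)" using "3.prems"(1) y by simp
  have v'pos: "0 < v'" using ok y by simp
  have IH: "pr v' (fst (unpr (y # r))) (snd (unpr (y # r))) = y # r"
    using "3.IH"[OF ok] "3.prems"(3) y by simp
  have "fst (unpr (y # r)) = s'" using y by (cases r) auto
  then show ?case using IH y v'pos by (cases t) auto
qed



fun spl :: "nat \<Rightarrow> seg list \<Rightarrow> (seg list \<times> seg list) option" where
  "spl a [] = None"
| "spl a (x # r) = (case spl (Suc a) r of Some (A, B) \<Rightarrow> Some (x # A, B)
     | None \<Rightarrow> (if 0 < snd (snd x) \<and> (r = [] \<or> fst (hd r) = Suc a) then Some ([decT x], r) else None))"

lemma spl_pr_None: "okS a pv pz S \<Longrightarrow> spl (Suc a) (pr v s S) = None"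
proof (induction S arbitrary: a pv pz v s)
  case Nil then show ?case by simp
next
  case (Cons x r)
  obtain v' s' t' where x: "x = (v',s',t')" by (cases x) auto
  have o: "v' \<le> Suc a" "okS (Suc a) v' (0 < t') r" using Cons.prems x by auto
  have "spl (Suc (Suc a)) (pr (if t' = 0 then Suc v' else v') s' r) = None" using Cons.IH[OF o(2)] .
  then show ?case using x o by auto
qed

lemma okS_unpr: "okS a qv qz q \<Longrightarrow> spl (Suc a) q = None \<Longrightarrow> q \<noteq> [] \<Longrightarrow>
  (if pz then pv \<le> fst (hd q) else pv < fst (hd q)) \<Longrightarrow> okS a pv pz (snd (unpr q))"
proof (induction q arbitrary: a qv qz pv pz rule: unpr.induct)
  case 1 then show ?case by simp
next
  case (2 v s t) then show ?case by simp
next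
  case (3 v s t y r)
  obtain v' s' t' where y: "y = (v',s',t')" by (cases y) auto
  have o: "0 < v" "v \<le> Suc a" "okS (Suc a) v (0 < t) (y # r)" using "3.prems"(1) by auto
  have o2: "0 < v'" "v' \<le> Suc (Suc a)" "if 0 < t then v \<le> v' else v < v'" using o(3) y by auto
  have sp: "spl (Suc (Suc a)) (y # r) = None" "\<not> (0 < t \<and> v' = Suc (Suc a))"
    using "3.prems"(2) y by (auto split: option.splits if_splits)
  define w where "w = v' - (if t = 0 then 1 else 0)"
  have w: "0 < w" "w \<le> Suc a" "v \<le> w" using o o2 sp unfolding w_def by (auto split: if_splits)
  have IH: "okS (Suc a) w (0 < t) (snd (unpr (y # r)))"
    by (rule "3.IH"[OF o(3) sp(1)]) (use o2 y w_def in auto)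
  have ch: "if pz then pv \<le> w else pv < w" using "3.prems"(4) w by (auto split: if_splits)
  show ?case using IH w ch y unfolding w_def by simp
qed

definition primeL :: "seg list option \<Rightarrow> seg list" where
  "primeL P = (case P of None \<Rightarrow> [(0,0,0)] | Some L \<Rightarrow> (0,0,0) # pr 1 (snd (snd (hd L))) (tl L))"

fun validO :: "seg list option \<Rightarrow> bool" where
  "validO None = True" | "validO (Some L) = validL L"

definition sizeL :: "seg list \<Rightarrow> nat" where "sizeL L = length (decL L)"

fun sizeO :: "seg list option \<Rightarrow> nat" where
  "sizeO None = 0" | "sizeO (Some L) = sizeL L"
fun ascO :: "seg list option \<Rightarrow> nat" where
  "ascO None = 0" | "ascO (Some L) = ascL L"
fun rlmO :: "seg list option \<Rightarrow> nat" where
  "rlmO None = 0" | "rlmO (Some L) = rlmL L"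

definition tcount :: "seg list \<Rightarrow> nat" where
  "tcount S = length (takeWhile (\<lambda>y. y = 0) (rev (map (\<lambda>x. snd (snd x)) S)))"

lemma rlmL_tcount:
  assumes "\<forall>x\<in>set S. 0 < fst x"
  shows "rlmL ((0,0,t0) # S) = Suc (tcount S)"
proof -
  have e: "takeWhile (\<lambda>x. \<not> hasZ x) (rev S) = takeWhile (\<lambda>x. snd (snd x) = 0) (rev S)"
    by (rule takeWhile_cong) (use assms in \<open>auto simp: hasZ_iff\<close>)
  have "takeWhile (\<lambda>x. \<not> hasZ x) (rev S @ [(0,0,t0)]) = takeWhile (\<lambda>x. \<not> hasZ x) (rev S)"
  proof (cases "\<forall>x\<in>set (rev S). \<not> hasZ x")
    case True
    have "takeWhile (\<lambda>x. \<not> hasZ x) (rev S @ [(0,0,t0)]) = rev S @ takeWhile (\<lambda>x. \<not> hasZ x) [(0,0,t0)]"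
      by (intro takeWhile_append2) (use True in auto)
    also have "\<dots> = rev S" by simp
    also have "\<dots> = takeWhile (\<lambda>x. \<not> hasZ x) (rev S)"
      by (rule sym, subst takeWhile_eq_all_conv) (use True in auto)
    finally show ?thesis .
  next
    case False
    then obtain x where "x \<in> set (rev S)" "hasZ x" by auto
    then show ?thesis by (intro takeWhile_append1) auto
  qed
  moreover have "length (takeWhile (\<lambda>x. snd (snd x) = 0) (rev S)) = tcount S"
    unfolding tcount_def rev_map takeWhile_map by (simp add: comp_def)
  ultimately show ?thesis unfolding rlmL_def using e by simp
qed

lemma tcount_pr: "tcount (pr v s S) = Suc (tcount S)"
  unfolding tcount_def t_pr by simp

lemma validL_pos: "validL ((0,0,t0) # S) \<Longrightarrow> \<forall>x\<in>set S. 0 < fst x"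
  using okS_pos by auto

lemma primeL_props:
  assumes "validO P"
  shows "validL (primeL P) \<and> spl 0 (primeL P) = None \<and> sizeL (primeL P) = Suc (sizeO P) \<and>
    ascL (primeL P) = ascO P + (if P = None then 0 else 1) \<and> rlmL (primeL P) = Suc (rlmO P) \<and>
    (\<forall>x\<in>set (tl (primeL P)). 0 < fst x) \<and> hd (primeL P) = (0,0,0) \<and>
    (tl (primeL P) \<noteq> [] \<longrightarrow> fst (hd (tl (primeL P))) = 1)"
proof (cases P)
  case None then show ?thesis by (simp add: primeL_def sizeL_def ascL_def rlmL_def)
next
  case (Some L)
  then have "validL L" using assms by simp
  then obtain t0 S where L: "L = (0,0,t0) # S" "okS 0 0 (0 < t0) S" using validL_cases by blast
  have pos: "\<forall>x\<in>set S. 0 < fst x" using L okS_pos by auto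
  have pe: "primeL P = (0,0,0) # pr 1 t0 S" using Some L by (simp add: primeL_def)
  have h: "S \<noteq> [] \<Longrightarrow> 1 \<le> fst (hd S)"
  proof -
    assume "S \<noteq> []"
    then have "hd S \<in> set S" by simp
    then have "0 < fst (hd S)" using pos by blast
    then show "1 \<le> fst (hd S)" by simp
  qed
  have v: "okS 0 0 False (pr 1 t0 S)"
    by (rule okS_pr[OF L(2)]) (use h in auto)
  have ppos: "\<forall>x\<in>set (pr 1 t0 S). 0 < fst x"
  proof
    fix x assume "x \<in> set (pr 1 t0 S)"
    then show "0 < fst x" using pos_pr[OF L(2), of 1 x t0] by simp
  qed
  have "rlmL (primeL P) = Suc (tcount (pr 1 t0 S))" unfolding pe by (rule rlmL_tcount[OF ppos])
  also have "\<dots> = Suc (Suc (tcount S))" by (simp add: tcount_pr)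
  also have "\<dots> = Suc (rlmL L)" using rlmL_tcount[OF pos] L by simp
  finally have r: "rlmL (primeL P) = Suc (rlmL L)" .
  have sp: "spl 0 (primeL P) = None" unfolding pe using spl_pr_None[OF L(2)] by simp
  have sz: "sizeL (primeL P) = Suc (sizeL L)" unfolding pe L(1) sizeL_def using length_decL_pr by simp
  have asc: "ascL (primeL P) = Suc (ascL L)" unfolding pe L(1) ascL_def
    using arg_cong[OF t_pr[of 1 t0 S], of length] by simp
  show ?thesis using Some v sp sz asc r ppos pe by simp
qed

lemma prime_hd: "validL p \<Longrightarrow> spl 0 p = None \<Longrightarrow> \<exists>S. p = (0,0,0) # S \<and> okS 0 0 False S \<and> spl 1 S = None"
proof -
  assume v: "validL p" and sp: "spl 0 p = None"
  obtain t0 S where p: "p = (0,0,t0) # S" "okS 0 0 (0 < t0) S" using validL_cases[OF v] by blast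
  have s1: "spl 1 S = None" using sp p by (auto split: option.splits)
  have "S = [] \<or> fst (hd S) = 1" using p(2) by (cases S) auto
  then have "t0 = 0" using sp p s1 by (auto split: if_splits)
  then show ?thesis using p s1 by auto
qed

lemma spl_append_Some: "spl (a + length X) Y = Some (C, D) \<Longrightarrow> spl a (X @ Y) = Some (X @ C, D)"
proof (induction X arbitrary: a)
  case Nil then show ?case by simp
next
  case (Cons x X)
  have "spl (Suc a) (X @ Y) = Some (X @ C, D)" using Cons.IH[of "Suc a"] Cons.prems by simp
  then show ?case by simp
qed

lemma primeL_surj:
  assumes "validL p" "spl 0 p = None"
  shows "\<exists>P. validO P \<and> p = primeL P"
proof -
  obtain S where p: "p = (0,0,0) # S" "okS 0 0 False S" "spl 1 S = None" using prime_hd[OF assms] by blast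
  show ?thesis
  proof (cases "S = []")
    case True then show ?thesis using p by (intro exI[of _ None]) (simp add: primeL_def)
  next
    case False
    have h1: "fst (hd S) = 1" using p(2) False by (cases S) auto
    have lastt: "snd (snd (last S)) = 0"
    proof (rule ccontr)
      assume ne: "snd (snd (last S)) \<noteq> 0"
      have Sd: "S = butlast S @ [last S]" using False by simp
      have "spl (1 + length (butlast S)) [last S] = Some ([decT (last S)], [])"
        using ne by simp
      then have "spl 1 (butlast S @ [last S]) = Some (butlast S @ [decT (last S)], [])"
        by (rule spl_append_Some)
      then show False using p(3) Sd by simp
    qed
    define L where "L = (0,0, fst (unpr S)) # snd (unpr S)"
    have "okS 0 0 (0 < fst (unpr S)) (snd (unpr S))"
      by (rule okS_unpr[OF p(2)]) (use p(3) False h1 in auto)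
    then have vL: "validL L" unfolding L_def by simp
    have "pr (fst (hd S)) (fst (unpr S)) (snd (unpr S)) = S" by (rule pr_unpr[OF p(2) False lastt])
    then have "p = primeL (Some L)" unfolding L_def primeL_def using p(1) h1 by simp
    then show ?thesis using vL by (intro exI[of _ "Some L"]) simp
  qed
qed

lemma primeL_inj: "validO P1 \<Longrightarrow> validO P2 \<Longrightarrow> primeL P1 = primeL P2 \<Longrightarrow> P1 = P2"
proof -
  assume v: "validO P1" "validO P2" and e: "primeL P1 = primeL P2"
  show "P1 = P2"
  proof (cases P1)
    case None
    then show ?thesis using e by (cases P2) (auto simp: primeL_def)
  next
    case (Some L1)
    then obtain L2 where P2: "P2 = Some L2" using e by (cases P2) (auto simp: primeL_def)
    obtain t1 S1 where L1: "L1 = (0,0,t1) # S1" using v Some validL_cases by fastforce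
    obtain t2 S2 where L2: "L2 = (0,0,t2) # S2" using v P2 validL_cases by fastforce
    have "pr 1 t1 S1 = pr 1 t2 S2" using e Some P2 L1 L2 by (simp add: primeL_def)
    then have "unpr (pr 1 t1 S1) = unpr (pr 1 t2 S2)" by simp
    then show ?thesis using Some P2 L1 L2 by (simp add: unpr_pr)
  qed
qed



definition concL :: "seg list option \<Rightarrow> seg list \<Rightarrow> seg list" where
  "concL Q p = (case Q of None \<Rightarrow> p | Some A \<Rightarrow> butlast A @ [incT (last A)] @ map (addV (length A - 1)) (tl p))"

lemma fst_addV[simp]: "fst (addV m x) = fst x + m" by (cases x) simp
lemma snd_addV[simp]: "snd (addV m x) = snd x" by (cases x) simp
lemma decT_addV: "decT (addV m x) = addV m (decT x)" by (cases x) simp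
lemma addV_0[simp]: "addV 0 x = x" by (cases x) simp
lemma map_addV_0[simp]: "map (addV 0) S = S" by (induction S) auto
lemma incT_decT: "0 < snd (snd x) \<Longrightarrow> incT (decT x) = x" by (cases x) simp
lemma decT_incT[simp]: "decT (incT x) = x" by (cases x) simp
lemma t_incT[simp]: "snd (snd (incT x)) = Suc (snd (snd x))" by (cases x) simp
lemma fst_incT[simp]: "fst (incT x) = fst x" by (cases x) simp
lemma hasZ_incT[simp]: "hasZ (incT x)" by (cases x) simp
lemma addV_subV: "m \<le> fst x \<Longrightarrow> addV m (subV m x) = x" by (cases x) simp
lemma subV_addV[simp]: "subV m (addV m x) = x" by (cases x) simp
lemma length_segL_addV[simp]: "length (segL (addV m x)) = length (segL x)" by (cases x) simp
lemma length_decL_addV[simp]: "length (decL (map (addV m) S)) = length (decL S)"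
  by (induction S) auto

lemma spl_shift: "spl (a + m) (map (addV m) S) = map_option (\<lambda>(C,D). (map (addV m) C, map (addV m) D)) (spl a S)"
proof (induction S arbitrary: a)
  case Nil then show ?case by simp
next
  case (Cons x r)
  have IH: "spl (Suc a + m) (map (addV m) r) = map_option (\<lambda>(C,D). (map (addV m) C, map (addV m) D)) (spl (Suc a) r)"
    using Cons.IH by blast
  show ?case
  proof (cases "spl (Suc a) r")
    case None
    then have "spl (Suc (a + m)) (map (addV m) r) = None" using IH by simp
    moreover have "(map (addV m) r = [] \<or> fst (hd (map (addV m) r)) = Suc (a + m)) \<longleftrightarrow> (r = [] \<or> fst (hd r) = Suc a)"
      by (cases r) auto
    ultimately show ?thesis using None by (simp add: decT_addV)
  next
    case (Some CD)
    then obtain C D where "spl (Suc a) r = Some (C, D)" by (cases CD) auto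
    then show ?thesis using IH by simp
  qed
qed

lemma spl_Some: "spl a L = Some (A, B) \<Longrightarrow> A \<noteq> [] \<and> L = butlast A @ [incT (last A)] @ B \<and>
   (B = [] \<or> fst (hd B) = a + length A) \<and> spl (a + length A) B = None"
proof (induction L arbitrary: a A B)
  case Nil then show ?case by simp
next
  case (Cons x r)
  show ?case
  proof (cases "spl (Suc a) r")
    case None
    then have c: "0 < snd (snd x) \<and> (r = [] \<or> fst (hd r) = Suc a)" "A = [decT x]" "B = r"
      using Cons.prems by (auto split: if_splits)
    then show ?thesis using None incT_decT[of x] by auto
  next
    case (Some CD)
    then obtain C D where s: "spl (Suc a) r = Some (C, D)" by (cases CD) auto
    then have e: "A = x # C" "B = D" using Cons.prems by auto
    have IH: "C \<noteq> [] \<and> r = butlast C @ [incT (last C)] @ D \<and> (D = [] \<or> fst (hd D) = Suc a + length C) \<and>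
        spl (Suc a + length C) D = None" using Cons.IH[OF s] .
    then show ?thesis using e by auto
  qed
qed

lemma okS_bound_last: "okS a pv pz S \<Longrightarrow> S \<noteq> [] \<Longrightarrow> fst (last S) \<le> a + length S"
proof (induction a pv pz S rule: okS.induct)
  case (1 a pv pz) then show ?case by simp
next
  case (2 a pv pz v s t r)
  show ?case
  proof (cases "r = []")
    case True then show ?thesis using "2.prems" by simp
  next
    case False then show ?thesis using 2 by simp
  qed
qed

lemma rlmL_gen:
  assumes "\<forall>x\<in>set Y. 0 < fst x" "hasZ y"
  shows "rlmL (X @ y # Y) = Suc (tcount Y)"
proof -
  have e: "takeWhile (\<lambda>x. \<not> hasZ x) (rev Y) = takeWhile (\<lambda>x. snd (snd x) = 0) (rev Y)"
    by (rule takeWhile_cong) (use assms in \<open>auto simp: hasZ_iff\<close>)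
  have r: "rev (X @ y # Y) = rev Y @ y # rev X" by simp
  have "takeWhile (\<lambda>x. \<not> hasZ x) (rev Y @ y # rev X) = takeWhile (\<lambda>x. \<not> hasZ x) (rev Y)"
  proof (cases "\<forall>x\<in>set (rev Y). \<not> hasZ x")
    case True
    have "takeWhile (\<lambda>x. \<not> hasZ x) (rev Y @ y # rev X) = rev Y @ takeWhile (\<lambda>x. \<not> hasZ x) (y # rev X)"
      by (intro takeWhile_append2) (use True in auto)
    also have "\<dots> = rev Y" using assms by simp
    also have "\<dots> = takeWhile (\<lambda>x. \<not> hasZ x) (rev Y)"
      by (rule sym, subst takeWhile_eq_all_conv) (use True in auto)
    finally show ?thesis .
  next
    case False
    then obtain x where "x \<in> set (rev Y)" "hasZ x" by auto
    then show ?thesis by (intro takeWhile_append1) auto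
  qed
  moreover have "length (takeWhile (\<lambda>x. snd (snd x) = 0) (rev Y)) = tcount Y"
    unfolding tcount_def rev_map takeWhile_map by (simp add: comp_def)
  ultimately show ?thesis unfolding rlmL_def r using e by simp
qed

lemma tcount_addV[simp]: "tcount (map (addV m) S) = tcount S"
  unfolding tcount_def by (simp add: comp_def)

lemma concL_props:
  assumes vA: "validL A" and vp: "validL p" and pp: "spl 0 p = None"
  shows "validL (concL (Some A) p) \<and> sizeL (concL (Some A) p) = sizeL A + sizeL p \<and>
    ascL (concL (Some A) p) = ascL A + ascL p \<and> rlmL (concL (Some A) p) = rlmL p \<and>
    spl 0 (concL (Some A) p) = Some (A, map (addV (length A - 1)) (tl p))"
proof -
  obtain Sp where p: "p = (0,0,0) # Sp" "okS 0 0 False Sp" "spl 1 Sp = None" using prime_hd[OF vp pp] by blast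
  obtain a0 SA where A: "A = (0,0,a0) # SA" "okS 0 0 (0 < a0) SA" using validL_cases[OF vA] by blast
  define m where "m = length A - 1"
  have mSA: "m = length SA" using A by (simp add: m_def)
  have posp: "\<forall>x\<in>set Sp. 0 < fst x" using p okS_pos by auto
  have h1: "Sp \<noteq> [] \<Longrightarrow> fst (hd Sp) = 1" using p(2) by (cases Sp) auto
  have cdef: "concL (Some A) p = butlast A @ [incT (last A)] @ map (addV m) Sp"
    unfolding concL_def m_def using p by simp
  have okSh: "okS m m False (map (addV m) Sp)" using okS_shift[OF p(2), of m] by simp
  have valid: "validL (concL (Some A) p)"
  proof (cases "SA = []")
    case True
    then have "concL (Some A) p = (0,0,Suc a0) # Sp" using cdef A mSA by simp
    moreover have "okS 0 0 True Sp" by (rule okS_change_prev[OF p(2)]) auto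
    ultimately show ?thesis by simp
  next
    case False
    have Ae: "butlast A @ [incT (last A)] = (0,0,a0) # (butlast SA @ [incT (last SA)])" using A False by simp
    have SAd: "SA = butlast SA @ [last SA]" using False by simp
    obtain v s t where lSA: "last SA = (v,s,t)" by (cases "last SA") auto
    have ok1: "okS 0 0 (0 < a0) (butlast SA @ [incT (last SA)])"
      using A(2) SAd lSA okS_last_cong[of 0 0 "0 < a0" "butlast SA" v s t s "Suc t"] by simp
    have vb: "fst (last SA) \<le> m" using okS_bound_last[OF A(2) False] mSA by simp
    have ok2: "okS m (fst (last SA)) True (map (addV m) Sp)"
      by (rule okS_change_prev[OF okSh]) (use vb h1 in \<open>auto simp: hd_map\<close>)
    have "okS 0 0 (0 < a0) ((butlast SA @ [incT (last SA)]) @ map (addV m) Sp)"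
      using ok1 ok2 mSA False by (subst okS_append) simp
    moreover have "concL (Some A) p = (0,0,a0) # ((butlast SA @ [incT (last SA)]) @ map (addV m) Sp)"
      unfolding cdef using Ae by (metis append.assoc append_Cons)
    ultimately show ?thesis by simp
  qed
  have An: "A = butlast A @ [last A]" using A by simp
  have dA: "decL (butlast A @ [incT (last A)]) = decL A @ [0]"
    using An segL_incT by (metis append.assoc decL_append decL_Cons decL_Nil append_Nil2)
  have "decL (concL (Some A) p) = decL A @ [0] @ decL (map (addV m) Sp)"
    using cdef dA by (metis append.assoc decL_append)
  moreover have "decL p = [0] @ decL Sp" using p(1) by simp
  ultimately have size: "sizeL (concL (Some A) p) = sizeL A + sizeL p"
    unfolding sizeL_def by simp
  have "length (concL (Some A) p) = length (butlast A) + 1 + length Sp" using cdef by simp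
  moreover have "length (butlast A) + 1 = length A" using A by simp
  moreover have "length p = Suc (length Sp)" using p(1) by simp
  ultimately have asc: "ascL (concL (Some A) p) = ascL A + ascL p"
    unfolding ascL_def by simp
  have rlm: "rlmL (concL (Some A) p) = rlmL p"
  proof -
    have "rlmL (butlast A @ incT (last A) # map (addV m) Sp) = Suc (tcount (map (addV m) Sp))"
      by (rule rlmL_gen) (use posp in auto)
    moreover have "rlmL p = Suc (tcount Sp)" unfolding p(1) by (rule rlmL_tcount[OF posp])
    ultimately show ?thesis unfolding cdef by simp
  qed
  have s1: "spl (Suc m) (map (addV m) Sp) = None" using spl_shift[of 1 m Sp] p(3) by simp
  have s2: "spl m (incT (last A) # map (addV m) Sp) = Some ([last A], map (addV m) Sp)"
    using s1 h1 by (cases Sp) (auto simp: hd_map)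
  have "spl (0 + length (butlast A)) ([incT (last A)] @ map (addV m) Sp) = Some ([last A], map (addV m) Sp)"
    using s2 m_def by simp
  then have "spl 0 (butlast A @ [incT (last A)] @ map (addV m) Sp) = Some (butlast A @ [last A], map (addV m) Sp)"
    by (rule spl_append_Some)
  then have sp: "spl 0 (concL (Some A) p) = Some (A, map (addV (length A - 1)) (tl p))"
    unfolding cdef using An p(1) m_def by simp
  show ?thesis using valid size asc rlm sp by simp
qed



lemma decomp_Some:
  assumes vL: "validL L" and sp: "spl 0 L = Some (A, B)"
  shows "validL A \<and> validL ((0,0,0) # map (subV (length A - 1)) B) \<and>
    spl 0 ((0,0,0) # map (subV (length A - 1)) B) = None \<and>
    L = concL (Some A) ((0,0,0) # map (subV (length A - 1)) B)"
proof -
  have S: "A \<noteq> []" "L = butlast A @ [incT (last A)] @ B" "B = [] \<or> fst (hd B) = length A"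
    "spl (length A) B = None" using spl_Some[OF sp] by auto
  obtain t0 S where L: "L = (0,0,t0) # S" "okS 0 0 (0 < t0) S" using validL_cases[OF vL] by blast
  define m where "m = length A - 1"
  define B' where "B' = map (subV m) B"
  have X: "S = tl (butlast A @ [incT (last A)]) @ B" using S(2) L(1)
    by (metis list.sel(3) append_assoc append_is_Nil_conv list.distinct(1) tl_append2)
  have lX: "length (tl (butlast A @ [incT (last A)])) = m" using S(1) by (simp add: m_def)
  have vA: "validL A"
  proof (cases "butlast A = []")
    case True
    then have Ax: "A = [last A]" using S(1) by (metis append_butlast_last_id append_Nil)
    define x where "x = last A"
    have Ax: "A = [x]" using Ax x_def by simp
    then have "incT x = (0,0,t0)" using S(2) L(1) by simp
    then show ?thesis using Ax by (cases x) auto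
  next
    case False
    then obtain C where bA: "butlast A = (0,0,t0) # C" using S(2) L(1) by (cases "butlast A") auto
    have SC: "S = (C @ [incT (last A)]) @ B" using S(2) L(1) bA by simp
    have okC: "okS 0 0 (0 < t0) (C @ [incT (last A)])" using L(2) SC okS_append by blast
    obtain v s t where la: "last A = (v,s,t)" by (cases "last A") auto
    have "okS 0 0 (0 < t0) (C @ [last A])" using okC la okS_last_cong[of 0 0 "0 < t0" C v s "Suc t" s t] by simp
    then have "validL ((0,0,t0) # (C @ [last A]))" by simp
    moreover have "A = (0,0,t0) # (C @ [last A])" using bA S(1) by (metis append_butlast_last_id append_Cons)
    ultimately show ?thesis by metis
  qed
  have okB: "okS m m False B"
  proof -
    have o: "okS m (if tl (butlast A @ [incT (last A)]) = [] then 0 else fst (last (tl (butlast A @ [incT (last A)]))))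
       (if tl (butlast A @ [incT (last A)]) = [] then 0 < t0 else 0 < snd (snd (last (tl (butlast A @ [incT (last A)]))))) B"
      using L(2) X lX okS_append by (metis add_0)
    have pzT: "(if tl (butlast A @ [incT (last A)]) = [] then 0 < t0 else 0 < snd (snd (last (tl (butlast A @ [incT (last A)])))))"
    proof (cases "tl (butlast A @ [incT (last A)]) = []")
      case True
      then have "butlast A = []" by (cases "butlast A") auto
      then have "incT (last A) = (0,0,t0)" using S(2) L(1) by simp
      then have "0 < t0" using t_incT[of "last A"] by simp
      then show ?thesis using True by simp
    next
      case False
      then have "last (tl (butlast A @ [incT (last A)])) = incT (last A)" by (metis last_snoc last_tl)
      then show ?thesis using False by simp
    qed
    show ?thesis by (rule okS_change_prev[OF o]) (use pzT S(3) m_def S(1) in \<open>auto split: if_splits\<close>)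
  qed
  have geB: "\<forall>x\<in>set B. m < fst x"
  proof
    fix x assume x: "x \<in> set B"
    then have "fst (hd B) \<le> fst x" using okS_mono_hd[OF okB] by simp
    moreover have "fst (hd B) = m + 1" using S(3) x S(1) m_def by auto
    ultimately show "m < fst x" by simp
  qed
  have BB: "map (addV m) B' = B" unfolding B'_def using geB by (induction B) (auto simp: addV_subV)
  have posB': "\<forall>x\<in>set B'. 0 < fst x" unfolding B'_def using geB by (auto simp: subV.simps split: prod.splits)
  have okB': "okS 0 0 False B'"
    by (rule okS_unshift[of 0 m 0 False B']) (use okB BB posB' in auto)
  have spB': "spl 1 B' = None"
  proof -
    have "spl (1 + m) (map (addV m) B') = map_option (\<lambda>(C,D). (map (addV m) C, map (addV m) D)) (spl 1 B')"
      by (rule spl_shift)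
    moreover have "1 + m = length A" using m_def S(1) by simp
    ultimately show ?thesis using S(4) BB by simp
  qed
  have vp: "validL ((0,0,0) # B')" using okB' by simp
  have pp: "spl 0 ((0,0,0) # B') = None" using spB' by simp
  have "L = concL (Some A) ((0,0,0) # B')" unfolding concL_def using S(2) BB m_def by simp
  then show ?thesis using vA vp pp unfolding B'_def m_def by simp
qed

definition DA :: "seg list option \<times> seg list option \<Rightarrow> seg list" where
  "DA QP = concL (fst QP) (primeL (snd QP))"

lemma DA_props:
  assumes "validO Q" "validO P"
  shows "validL (DA (Q,P)) \<and> sizeL (DA (Q,P)) = sizeO Q + Suc (sizeO P) \<and>
    ascL (DA (Q,P)) = ascO Q + ascO P + (if P = None then 0 else 1) \<and> rlmL (DA (Q,P)) = Suc (rlmO P)"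
proof -
  have pp: "validL (primeL P) \<and> spl 0 (primeL P) = None \<and> sizeL (primeL P) = Suc (sizeO P) \<and>
    ascL (primeL P) = ascO P + (if P = None then 0 else 1) \<and> rlmL (primeL P) = Suc (rlmO P)"
    using primeL_props[OF assms(2)] by simp
  show ?thesis
  proof (cases Q)
    case None then show ?thesis using pp by (simp add: DA_def concL_def)
  next
    case (Some A)
    then have "validL A" using assms by simp
    then show ?thesis using concL_props[of A "primeL P"] pp Some by (simp add: DA_def)
  qed
qed

lemma DA_spl: "validO Q \<Longrightarrow> validO P \<Longrightarrow> spl 0 (DA (Q,P)) =
  (case Q of None \<Rightarrow> None | Some A \<Rightarrow> Some (A, map (addV (length A - 1)) (tl (primeL P))))"
proof -
  assume v: "validO Q" "validO P"
  have pp: "validL (primeL P)" "spl 0 (primeL P) = None" using primeL_props[OF v(2)] by auto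
  show ?thesis
  proof (cases Q)
    case None then show ?thesis using pp by (simp add: DA_def concL_def)
  next
    case (Some A)
    then have "validL A" using v by simp
    then show ?thesis using concL_props[of A "primeL P"] pp Some by (simp add: DA_def)
  qed
qed

lemma DA_inj: "validO Q1 \<Longrightarrow> validO P1 \<Longrightarrow> validO Q2 \<Longrightarrow> validO P2 \<Longrightarrow> DA (Q1,P1) = DA (Q2,P2) \<Longrightarrow> Q1 = Q2 \<and> P1 = P2"
proof -
  assume v: "validO Q1" "validO P1" "validO Q2" "validO P2" and e: "DA (Q1,P1) = DA (Q2,P2)"
  have s: "(case Q1 of None \<Rightarrow> None | Some A \<Rightarrow> Some (A, map (addV (length A - 1)) (tl (primeL P1)))) =
           (case Q2 of None \<Rightarrow> None | Some A \<Rightarrow> Some (A, map (addV (length A - 1)) (tl (primeL P2))))"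
    using DA_spl[OF v(1,2)] DA_spl[OF v(3,4)] e by simp
  have h1: "hd (primeL P1) = (0,0,0)" "hd (primeL P2) = (0,0,0)" using primeL_props v by auto
  have ne: "primeL P1 \<noteq> []" "primeL P2 \<noteq> []" by (auto simp: primeL_def split: option.splits)
  show ?thesis
  proof (cases Q1)
    case None
    then have "Q2 = None" using s by (cases Q2) auto
    then have "primeL P1 = primeL P2" using e None by (simp add: DA_def concL_def)
    then show ?thesis using primeL_inj v None \<open>Q2 = None\<close> by blast
  next
    case (Some A)
    then obtain A2 where Q2: "Q2 = Some A2" using s by (cases Q2) auto
    have "A = A2" "map (addV (length A - 1)) (tl (primeL P1)) = map (addV (length A - 1)) (tl (primeL P2))"
      using s Some Q2 by auto
    then have "tl (primeL P1) = tl (primeL P2)"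
      by (metis (no_types) map_map subV_addV comp_def map_idI)
    then have "primeL P1 = primeL P2" using h1 ne by (metis list.collapse)
    then show ?thesis using primeL_inj v Some Q2 \<open>A = A2\<close> by blast
  qed
qed

lemma DA_surj:
  assumes "validL L"
  shows "\<exists>Q P. validO Q \<and> validO P \<and> L = DA (Q,P)"
proof (cases "spl 0 L")
  case None
  then obtain P where "validO P" "L = primeL P" using primeL_surj[OF assms] by blast
  then show ?thesis by (intro exI[of _ None] exI[of _ P]) (simp add: DA_def concL_def)
next
  case (Some AB)
  then obtain A B where s: "spl 0 L = Some (A, B)" by (cases AB) auto
  define p where "p = (0,0,0) # map (subV (length A - 1)) B"
  have d: "validL A" "validL p" "spl 0 p = None" "L = concL (Some A) p"
    using decomp_Some[OF assms s] unfolding p_def by auto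
  obtain P where "validO P" "p = primeL P" using primeL_surj[OF d(2,3)] by blast
  then show ?thesis using d by (intro exI[of _ "Some A"] exI[of _ P]) (simp add: DA_def)
qed



definition UA :: "nat \<Rightarrow> seg list option set" where
  "UA n = {Q. validO Q \<and> sizeO Q = n}"

lemma sizeL_pos: "validL L \<Longrightarrow> 0 < sizeL L"
  using validL_props by (auto simp: sizeL_def)

lemma UA_0: "UA 0 = {None}"
proof -
  have "Q \<in> UA 0 \<Longrightarrow> Q = None" for Q by (cases Q) (auto simp: UA_def dest: sizeL_pos)
  then show ?thesis by (auto simp: UA_def)
qed

lemma PS_0: "perms_avoid_132 0 = {[]}"
  by (auto simp: perms_avoid_132_def perms_def contains_132_def)

lemma perms_length: "p \<in> perms k \<Longrightarrow> length p = k" by (simp add: perms_def)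

lemma main_bij: "\<exists>f. bij_betw f (UA n) (perms_avoid_132 n) \<and> (\<forall>Q\<in>UA n. asc (f Q) = ascO Q \<and> rlm (f Q) = rlmO Q)"
proof (induction n rule: less_induct)
  case (less n)
  show ?case
  proof (cases n)
    case 0
    show ?thesis using 0 UA_0 PS_0
      by (intro exI[of _ "\<lambda>_. []"]) (auto simp: bij_betw_def)
  next
    case (Suc m)
    have "\<forall>k. \<exists>f. k < n \<longrightarrow> bij_betw f (UA k) (perms_avoid_132 k) \<and> (\<forall>Q\<in>UA k. asc (f Q) = ascO Q \<and> rlm (f Q) = rlmO Q)"
      using less by blast
    then obtain F where F0: "\<forall>k. k < n \<longrightarrow> bij_betw (F k) (UA k) (perms_avoid_132 k) \<and> (\<forall>Q\<in>UA k. asc (F k Q) = ascO Q \<and> rlm (F k Q) = rlmO Q)"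
      by (rule choice[THEN exE]) blast
    have F: "\<And>k. k < n \<Longrightarrow> bij_betw (F k) (UA k) (perms_avoid_132 k) \<and> (\<forall>Q\<in>UA k. asc (F k Q) = ascO Q \<and> rlm (F k Q) = rlmO Q)"
      using F0 by blast
    define g where "g Q = F (sizeO Q) Q" for Q
    define PA where "PA = {(Q,P). validO Q \<and> validO P \<and> sizeO Q + sizeO P = m}"
    define PS where "PS = {(q,p). q \<in> perms_avoid_132 (length q) \<and> p \<in> perms_avoid_132 (length p) \<and> length q + length p = m}"
    define G where "G = (\<lambda>(Q,P). (g Q, g P))"
    have gin: "\<And>Q. validO Q \<Longrightarrow> sizeO Q < n \<Longrightarrow> g Q \<in> perms_avoid_132 (sizeO Q) \<and> length (g Q) = sizeO Q \<and>
        asc (g Q) = ascO Q \<and> rlm (g Q) = rlmO Q"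
    proof -
      fix Q assume v: "validO Q" "sizeO Q < n"
      have "Q \<in> UA (sizeO Q)" using v by (simp add: UA_def)
      then show "g Q \<in> perms_avoid_132 (sizeO Q) \<and> length (g Q) = sizeO Q \<and> asc (g Q) = ascO Q \<and> rlm (g Q) = rlmO Q"
        using F[OF v(2)] unfolding g_def bij_betw_def perms_avoid_132_def perms_def by auto
    qed
    have bG: "bij_betw G PA PS"
      unfolding bij_betw_def
    proof
      show "inj_on G PA"
      proof (rule inj_onI)
        fix x y assume x: "x \<in> PA" and y: "y \<in> PA" and e: "G x = G y"
        obtain Q1 P1 where x': "x = (Q1,P1)" by (cases x)
        obtain Q2 P2 where y': "y = (Q2,P2)" by (cases y)
        have v: "validO Q1" "validO P1" "validO Q2" "validO P2" "sizeO Q1 < n" "sizeO P1 < n" "sizeO Q2 < n" "sizeO P2 < n"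
          using x y x' y' Suc by (auto simp: PA_def)
        have e1: "g Q1 = g Q2" "g P1 = g P2" using e x' y' by (auto simp: G_def)
        have "sizeO Q1 = sizeO Q2" using gin[OF v(1,5)] gin[OF v(3,7)] e1 by metis
        then have "Q1 = Q2" using F[OF v(5)] e1(1) v unfolding g_def bij_betw_def inj_on_def UA_def by auto
        moreover have "sizeO P1 = sizeO P2" using gin[OF v(2,6)] gin[OF v(4,8)] e1 by metis
        then have "P1 = P2" using F[OF v(6)] e1(2) v unfolding g_def bij_betw_def inj_on_def UA_def by auto
        ultimately show "x = y" using x' y' by simp
      qed
    next
      show "G ` PA = PS"
      proof
        show "G ` PA \<subseteq> PS"
        proof
          fix y assume "y \<in> G ` PA"
          then obtain Q P where QP: "validO Q" "validO P" "sizeO Q + sizeO P = m" "y = (g Q, g P)"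
            by (auto simp: PA_def G_def)
          have "sizeO Q < n" "sizeO P < n" using QP Suc by auto
          then show "y \<in> PS" using gin QP by (auto simp: PS_def)
        qed
      next
        show "PS \<subseteq> G ` PA"
        proof
          fix y assume "y \<in> PS"
          then obtain q p where y: "y = (q,p)" "q \<in> perms_avoid_132 (length q)" "p \<in> perms_avoid_132 (length p)"
            "length q + length p = m" by (auto simp: PS_def)
          have lq: "length q < n" "length p < n" using y Suc by auto
          obtain Q where Q: "Q \<in> UA (length q)" "F (length q) Q = q"
            using F[OF lq(1)] y(2) unfolding bij_betw_def by (metis imageE)
          obtain P where P: "P \<in> UA (length p)" "F (length p) P = p"
            using F[OF lq(2)] y(3) unfolding bij_betw_def by (metis imageE)
          have "g Q = q" "g P = p" using Q P by (auto simp: g_def UA_def)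
          moreover have "(Q,P) \<in> PA" using Q P y by (auto simp: PA_def UA_def)
          ultimately show "y \<in> G ` PA" using y by (auto simp: G_def intro!: image_eqI[of _ _ "(Q,P)"])
        qed
      qed
    qed
    define DS' where "DS' = (\<lambda>(q,p). DS q p)"
    have bDS: "bij_betw DS' PS (perms_avoid_132 n)"
      unfolding bij_betw_def
    proof
      show "inj_on DS' PS"
      proof (rule inj_onI)
        fix x y assume "x \<in> PS" "y \<in> PS" "DS' x = DS' y"
        then show "x = y" using DS_inj[of "fst x" "snd x" "fst y" "snd y"]
          by (cases x; cases y) (simp add: DS'_def)
      qed
    next
      show "DS' ` PS = perms_avoid_132 n"
      proof
        show "DS' ` PS \<subseteq> perms_avoid_132 n"
        proof
          fix y assume "y \<in> DS' ` PS"
          then obtain q p where y: "y = DS q p" "q \<in> perms_avoid_132 (length q)" "p \<in> perms_avoid_132 (length p)"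
            "length q + length p = m" by (auto simp: PS_def DS'_def)
          have pq: "q \<in> perms (length q)" "p \<in> perms (length p)" "\<not> contains_132 q" "\<not> contains_132 p"
            using y(2,3) by (auto simp: perms_avoid_132_def)
          have "DS q p \<in> perms (length q + length p + 1)" by (rule DS_perm[OF pq(1,2)])
          moreover have "\<not> contains_132 (DS q p)" by (rule DS_avoid[OF pq(2,3,4,1)])
          ultimately show "y \<in> perms_avoid_132 n" using y Suc by (simp add: perms_avoid_132_def)
        qed
      next
        show "perms_avoid_132 n \<subseteq> DS' ` PS"
        proof
          fix y assume "y \<in> perms_avoid_132 n"
          then have yy: "y \<in> perms (Suc m)" "\<not> contains_132 y" using Suc by (auto simp: perms_avoid_132_def)
          obtain q p where qp: "q \<in> perms (length q)" "p \<in> perms (length p)" "length q + length p = m"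
            "\<not> contains_132 q" "\<not> contains_132 p" "y = DS q p" using DS_surj[OF yy] by metis
          have "(q,p) \<in> PS" using qp by (simp add: PS_def perms_avoid_132_def)
          moreover have "y = DS' (q,p)" using qp by (simp add: DS'_def)
          ultimately show "y \<in> DS' ` PS" by blast
        qed
      qed
    qed
    define SD where "SD = (\<lambda>QP. Some (DA QP))"
    have bSD: "bij_betw SD PA (UA n)"
      unfolding bij_betw_def
    proof
      show "inj_on SD PA" using DA_inj by (auto simp: inj_on_def SD_def PA_def)
    next
      show "SD ` PA = UA n"
      proof
        show "SD ` PA \<subseteq> UA n" using DA_props Suc by (auto simp: SD_def PA_def UA_def)
      next
        show "UA n \<subseteq> SD ` PA"
        proof
          fix Q0 assume Q0: "Q0 \<in> UA n"
          then obtain L where L: "Q0 = Some L" "validL L" "sizeL L = n" using Suc by (cases Q0) (auto simp: UA_def)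
          obtain Q P where QP: "validO Q" "validO P" "L = DA (Q,P)" using DA_surj[OF L(2)] by blast
          have "sizeO Q + sizeO P = m" using DA_props[OF QP(1,2)] QP(3) L(3) Suc by simp
          then show "Q0 \<in> SD ` PA" using QP L by (auto simp: SD_def PA_def)
        qed
      qed
    qed
    define f where "f = DS' \<circ> (G \<circ> inv_into PA SD)"
    have bf: "bij_betw f (UA n) (perms_avoid_132 n)"
      unfolding f_def by (rule bij_betw_trans[OF bij_betw_trans[OF bij_betw_inv_into[OF bSD] bG] bDS])
    have stats: "\<forall>Q0\<in>UA n. asc (f Q0) = ascO Q0 \<and> rlm (f Q0) = rlmO Q0"
    proof
      fix Q0 assume Q0: "Q0 \<in> UA n"
      define QP where "QP = inv_into PA SD Q0"
      have QPin: "QP \<in> PA" and SQ: "SD QP = Q0"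
        using bij_betw_inv_into_right[OF bSD Q0] inv_into_into[of Q0 SD PA] bSD Q0
        unfolding QP_def bij_betw_def by auto
      obtain Q P where QPe: "QP = (Q,P)" by (cases QP)
      have v: "validO Q" "validO P" "sizeO Q + sizeO P = m" using QPin QPe by (auto simp: PA_def)
      have gQ: "asc (g Q) = ascO Q" "rlm (g Q) = rlmO Q" "g Q \<in> perms_avoid_132 (sizeO Q)"
        using gin[OF v(1)] v Suc by auto
      have gP: "asc (g P) = ascO P" "rlm (g P) = rlmO P" "g P \<in> perms_avoid_132 (sizeO P)" "length (g P) = sizeO P"
        using gin[OF v(2)] v Suc by auto
      have Pn: "(g P = []) = (P = None)"
      proof (cases P)
        case None then show ?thesis using gP(4) by simp
      next
        case (Some L)
        then have "0 < sizeO P" using sizeL_pos v(2) by simp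
        then show ?thesis using gP(4) Some by auto
      qed
      have "f Q0 = DS' (G QP)" unfolding f_def QP_def by simp
      then have fe: "f Q0 = DS (g Q) (g P)" using QPe by (simp add: G_def DS'_def)
      have "asc (f Q0) = asc (g Q) + asc (g P) + (if g P = [] then 0 else 1)"
        unfolding fe using DS_asc gQ(3) gP(3) by (auto simp: perms_avoid_132_def)
      moreover have "rlm (f Q0) = rlm (g P) + 1"
        unfolding fe using DS_rlm gP(3) by (auto simp: perms_avoid_132_def)
      moreover have "Q0 = Some (DA (Q,P))" using SQ QPe by (simp add: SD_def)
      ultimately show "asc (f Q0) = ascO Q0 \<and> rlm (f Q0) = rlmO Q0"
        using DA_props[OF v(1,2)] gQ gP Pn by simp
    qed
    show ?thesis using bf stats by blast
  qed
qed

definition decO :: "seg list option \<Rightarrow> nat list" where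
  "decO Q = (case Q of None \<Rightarrow> [] | Some L \<Rightarrow> decL L)"

lemma trans_bijO: "bij_betw decO (UA n) (ascent_seqs_avoid_021 n) \<and> (\<forall>Q\<in>UA n. asc (decO Q) = ascO Q \<and> rlm (decO Q) = rlmO Q)"
proof (cases "n = 0")
  case True
  have A0: "ascent_seqs_avoid_021 0 = {[]}" using isA_Nil by (auto simp: AS_eq)
  have "bij_betw decO {None} {[]}" unfolding bij_betw_def by (simp add: decO_def)
  moreover have "asc (decO None) = ascO None \<and> rlm (decO None) = rlmO None" by (simp add: decO_def)
  ultimately show ?thesis using True UA_0 A0 by simp
next
  case False
  have inU: "\<And>Q. Q \<in> UA n \<Longrightarrow> \<exists>L. Q = Some L \<and> validL L \<and> length (decL L) = n"
  proof -
    fix Q assume Q: "Q \<in> UA n"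
    show "\<exists>L. Q = Some L \<and> validL L \<and> length (decL L) = n"
    proof (cases Q)
      case None then show ?thesis using Q False by (simp add: UA_def)
    next
      case (Some L) then show ?thesis using Q by (simp add: UA_def sizeL_def)
    qed
  qed
  have U: "UA n = Some ` {L. validL L \<and> length (decL L) = n}"
  proof
    show "UA n \<subseteq> Some ` {L. validL L \<and> length (decL L) = n}"
    proof
      fix Q assume "Q \<in> UA n"
      then obtain L where "Q = Some L" "validL L" "length (decL L) = n" using inU by blast
      then show "Q \<in> Some ` {L. validL L \<and> length (decL L) = n}" by blast
    qed
    show "Some ` {L. validL L \<and> length (decL L) = n} \<subseteq> UA n" by (auto simp: UA_def sizeL_def)
  qed
  have b: "bij_betw decL {L. validL L \<and> length (decL L) = n} (ascent_seqs_avoid_021 n)"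
    using trans_bij False by simp
  have bT: "bij_betw the (UA n) {L. validL L \<and> length (decL L) = n}"
    unfolding U bij_betw_def by (simp add: inj_on_def image_image)
  have c: "bij_betw (decL \<circ> the) (UA n) (ascent_seqs_avoid_021 n)"
    by (rule bij_betw_trans[OF bT b])
  have eq: "\<And>Q. Q \<in> UA n \<Longrightarrow> (decL \<circ> the) Q = decO Q"
  proof -
    fix Q assume "Q \<in> UA n"
    then obtain L where "Q = Some L" using inU by blast
    then show "(decL \<circ> the) Q = decO Q" by (simp add: decO_def)
  qed
  have "bij_betw decO (UA n) (ascent_seqs_avoid_021 n)"
    using bij_betw_cong[of "UA n" "decL \<circ> the" decO "ascent_seqs_avoid_021 n"] eq c by blast
  moreover have "\<forall>Q\<in>UA n. asc (decO Q) = ascO Q \<and> rlm (decO Q) = rlmO Q"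
  proof
    fix Q assume "Q \<in> UA n"
    then obtain L where L: "Q = Some L" "validL L" using inU by blast
    then show "asc (decO Q) = ascO Q \<and> rlm (decO Q) = rlmO Q" using validL_props[OF L(2)] by (simp add: decO_def)
  qed
  ultimately show ?thesis by simp
qed

lemma card_transfer:
  assumes "bij_betw h A B" "\<forall>x\<in>A. asc (h x) = asc x \<and> rlm (h x) = rlm x"
  shows "card {x \<in> A. asc x = a \<and> rlm x = r} = card {y \<in> B. asc y = a \<and> rlm y = r}"
proof -
  have hA: "h ` A = B" using assms(1) by (simp add: bij_betw_def)
  have im: "h ` {x \<in> A. asc x = a \<and> rlm x = r} = {y \<in> B. asc y = a \<and> rlm y = r}"
  proof
    show "h ` {x \<in> A. asc x = a \<and> rlm x = r} \<subseteq> {y \<in> B. asc y = a \<and> rlm y = r}"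
    proof
      fix y assume "y \<in> h ` {x \<in> A. asc x = a \<and> rlm x = r}"
      then obtain x where x: "x \<in> A" "asc x = a" "rlm x = r" "y = h x" by blast
      have "y \<in> B" using x hA by blast
      then show "y \<in> {y \<in> B. asc y = a \<and> rlm y = r}" using x assms(2) by simp
    qed
  next
    show "{y \<in> B. asc y = a \<and> rlm y = r} \<subseteq> h ` {x \<in> A. asc x = a \<and> rlm x = r}"
    proof
      fix y assume y: "y \<in> {y \<in> B. asc y = a \<and> rlm y = r}"
      then have "y \<in> h ` A" using hA by simp
      then obtain x where x: "x \<in> A" "y = h x" by blast
      then have "asc x = a" "rlm x = r" using y assms(2) by auto
      then show "y \<in> h ` {x \<in> A. asc x = a \<and> rlm x = r}" using x by blast
    qed
  qed
  have inj: "inj_on h {x \<in> A. asc x = a \<and> rlm x = r}"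
    by (rule inj_on_subset[OF bij_betw_imp_inj_on[OF assms(1)]]) blast
  have "card (h ` {x \<in> A. asc x = a \<and> rlm x = r}) = card {x \<in> A. asc x = a \<and> rlm x = r}"
    by (rule card_image[OF inj])
  then show ?thesis unfolding im by simp
qed

theorem mainTheorem1:
  fixes n a r :: nat
  shows "card {x \<in> ascent_seqs_avoid_021 n. asc x = a \<and> rlm x = r}
       = card {p \<in> perms_avoid_132 n. asc p = a \<and> rlm p = r}"
proof -
  obtain f where f: "bij_betw f (UA n) (perms_avoid_132 n)" "\<forall>Q\<in>UA n. asc (f Q) = ascO Q \<and> rlm (f Q) = rlmO Q"
    using main_bij by blast
  have d: "bij_betw decO (UA n) (ascent_seqs_avoid_021 n)" "\<forall>Q\<in>UA n. asc (decO Q) = ascO Q \<and> rlm (decO Q) = rlmO Q"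
    using trans_bijO by auto
  define h where "h = f \<circ> inv_into (UA n) decO"
  have bh: "bij_betw h (ascent_seqs_avoid_021 n) (perms_avoid_132 n)"
    unfolding h_def by (rule bij_betw_trans[OF bij_betw_inv_into[OF d(1)] f(1)])
  have "\<forall>x\<in>ascent_seqs_avoid_021 n. asc (h x) = asc x \<and> rlm (h x) = rlm x"
  proof
    fix x assume x: "x \<in> ascent_seqs_avoid_021 n"
    define Q where "Q = inv_into (UA n) decO x"
    have Q: "Q \<in> UA n" "decO Q = x"
      using x d(1) unfolding Q_def bij_betw_def by (auto intro: inv_into_into f_inv_into_f)
    have hx: "h x = f Q" by (simp add: h_def Q_def)
    show "asc (h x) = asc x \<and> rlm (h x) = rlm x"
      using f(2) d(2) Q unfolding hx by auto
  qed
  then show ?thesis using card_transfer[OF bh] by blast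
qed


end
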